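(* Let $H_1,H_2$ be complex Hilbert spaces and let $S,T:H_1\supseteq D\to H_2$ be densely defined closed linear operators with the same domain $D(S)=D(T)$. Write $\check S=(I+S^*S)^{-1}$, $\check T=(I+T^*T)^{-1}$, $\widehat S=(I+SS^* )^{-1}$, $\widehat T=(I+TT^* )^{-1}$. Then: (1) the operators $\widehat T^{1/2}(T-S)\check S^{1/2}$ and $\widehat S^{1/2}(S-T)\check T^{1/2}$ are bounded and $$\theta(S,T)=\max\Big\{\|\widehat T^{1/2}(T-S)\check S^{1/2}\|,\ \|\widehat S^{1/2}(S-T)\check T^{1/2}\|\Big\};$$ (2) if $T-S$ (defined on $D(T)=D(S)$) is bounded, then $\theta(S,T)\leq \|S-T\|$.
   Context: Hilbert spaces are complex and infinite dimensional. For a densely defined closed operator $A$ from $H_1$ to $H_2$, $\check A=(I+A^*A)^{-1}\in\mathcal B(H_1)$ and $\widehat A=(I+AA^* )^{-1}\in\mathcal B(H_2)$ are bounded positive operators, and $\check A^{1/2},\widehat A^{1/2}$ denote their positive square roots. The graph of $A$ is $G(A)=\{(Ax,x):x\in D(A)\}$, a closed subspace of the product Hilbert space. The gap between densely defined closed operators $A,B$ is $\theta(A,B)=\|P_{G(A)}-P_{G(B)}\|$, where $P_M$ denotes the orthogonal projection onto a closed subspace $M$. For bounded $T-S$ defined on the dense domain $D(T)$, $\|T-S\|$ is its operator norm. *)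

theory Defs
  imports "HOL-Analysis.Analysis"
begin

section \<open>Complex inner product spaces and complex Hilbert spaces\<close>

class complex_vector = real_vector +
  fixes scaleC :: "complex \<Rightarrow> 'a \<Rightarrow> 'a" (infixr \<open>*\<^sub>C\<close> 75)
  assumes scaleC_add_right: "a *\<^sub>C (x + y) = a *\<^sub>C x + a *\<^sub>C y"
    and scaleC_add_left: "(a + b) *\<^sub>C x = a *\<^sub>C x + b *\<^sub>C x"
    and scaleC_scaleC: "a *\<^sub>C (b *\<^sub>C x) = (a * b) *\<^sub>C x"
    and scaleC_one: "1 *\<^sub>C x = x"
    and scaleR_scaleC: "scaleR r x = complex_of_real r *\<^sub>C x"

text \<open>Inner product: conjugate-linear in the first, linear in the second argument.\<close>
class complex_inner = complex_vector + real_normed_vector +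
  fixes cinner :: "'a \<Rightarrow> 'a \<Rightarrow> complex"
  assumes cinner_commute: "cinner x y = cnj (cinner y x)"
    and cinner_add_left: "cinner (x + y) z = cinner x z + cinner y z"
    and cinner_scaleC_left: "cinner (r *\<^sub>C x) y = cnj r * cinner x y"
    and cinner_ge_zero: "0 \<le> Re (cinner x x)"
    and cinner_eq_zero_iff: "cinner x x = 0 \<longleftrightarrow> x = 0"
    and norm_eq_sqrt_cinner: "norm x = sqrt (Re (cinner x x))"

class chilbert_space = complex_inner + complete_space

text \<open>Infinite dimensionality: no finite set spans the space (complex span).\<close>
definition infinite_dimensional :: "'a::complex_vector itself \<Rightarrow> bool" where
  "infinite_dimensional _ \<longleftrightarrow>
     (\<forall>B::'a set. finite B \<longrightarrow> module.span ((*\<^sub>C)) B \<noteq> UNIV)"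

section \<open>(Unbounded) linear operators, given by a domain and a function\<close>

definition csubspace :: "'a::complex_vector set \<Rightarrow> bool" where
  "csubspace D \<longleftrightarrow> 0 \<in> D \<and> (\<forall>x\<in>D. \<forall>y\<in>D. x + y \<in> D) \<and> (\<forall>c. \<forall>x\<in>D. c *\<^sub>C x \<in> D)"

definition clinear_on :: "'a::complex_vector set \<Rightarrow> ('a \<Rightarrow> 'b::complex_vector) \<Rightarrow> bool" where
  "clinear_on D A \<longleftrightarrow> csubspace D \<and>
     (\<forall>x\<in>D. \<forall>y\<in>D. A (x + y) = A x + A y) \<and> (\<forall>c. \<forall>x\<in>D. A (c *\<^sub>C x) = c *\<^sub>C A x)"

definition clinear :: "('a::complex_vector \<Rightarrow> 'b::complex_vector) \<Rightarrow> bool" where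
  "clinear A \<longleftrightarrow> clinear_on UNIV A"

definition bounded_clinear :: "('a::complex_inner \<Rightarrow> 'b::complex_inner) \<Rightarrow> bool" where
  "bounded_clinear A \<longleftrightarrow> clinear A \<and> (\<exists>K. \<forall>x. norm (A x) \<le> norm x * K)"

definition densely_defined :: "'a::complex_inner set \<Rightarrow> bool" where
  "densely_defined D \<longleftrightarrow> closure D = UNIV"

text \<open>Graph \<open>G(A) = {(Ax, x) : x \<in> D(A)}\<close>, a subset of \<open>H2 \<times> H1\<close>.\<close>
definition op_graph :: "'a set \<Rightarrow> ('a \<Rightarrow> 'b) \<Rightarrow> ('b \<times> 'a) set" where
  "op_graph D A = {(A x, x) | x. x \<in> D}"

definition closed_op :: "'a::complex_inner set \<Rightarrow> ('a \<Rightarrow> 'b::complex_inner) \<Rightarrow> bool" where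
  "closed_op D A \<longleftrightarrow> closed (op_graph D A)"

text \<open>Adjoint \<open>A^*\<close>: domain and action.\<close>
definition adj_dom :: "'a::complex_inner set \<Rightarrow> ('a \<Rightarrow> 'b::complex_inner) \<Rightarrow> 'b set" where
  "adj_dom D A = {y. \<exists>z. \<forall>x\<in>D. cinner (A x) y = cinner x z}"

definition adj :: "'a::complex_inner set \<Rightarrow> ('a \<Rightarrow> 'b::complex_inner) \<Rightarrow> 'b \<Rightarrow> 'a" where
  "adj D A y = (THE z. \<forall>x\<in>D. cinner (A x) y = cinner x z)"

text \<open>\<open>check A = (I + A^*A)^{-1}\<close>, where \<open>D(A^*A) = {x \<in> D(A). Ax \<in> D(A^* )}\<close>.\<close>
definition check_op :: "'a::complex_inner set \<Rightarrow> ('a \<Rightarrow> 'b::complex_inner) \<Rightarrow> 'a \<Rightarrow> 'a" where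
  "check_op D A y = (THE x. x \<in> D \<and> A x \<in> adj_dom D A \<and> x + adj D A (A x) = y)"

text \<open>\<open>hat A = (I + AA^*)^{-1}\<close>, where \<open>D(AA^*) = {y \<in> D(A^*). A^*y \<in> D(A)}\<close>.\<close>
definition hat_op :: "'a::complex_inner set \<Rightarrow> ('a \<Rightarrow> 'b::complex_inner) \<Rightarrow> 'b \<Rightarrow> 'b" where
  "hat_op D A y = (THE x. x \<in> adj_dom D A \<and> adj D A x \<in> D \<and> x + A (adj D A x) = y)"

definition positive_op :: "('a::complex_inner \<Rightarrow> 'a) \<Rightarrow> bool" where
  "positive_op R \<longleftrightarrow> (\<forall>x. Im (cinner x (R x)) = 0 \<and> 0 \<le> Re (cinner x (R x)))"

text \<open>Positive square root of a bounded positive operator.\<close>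
definition op_sqrt :: "('a::complex_inner \<Rightarrow> 'a) \<Rightarrow> 'a \<Rightarrow> 'a" where
  "op_sqrt B = (THE R. bounded_clinear R \<and> positive_op R \<and> (\<forall>x. R (R x) = B x))"

section \<open>Orthogonal projections onto closed subspaces of \<open>H2 \<times> H1\<close>, and the gap\<close>

definition prod_cinner :: "('b::complex_inner \<times> 'a::complex_inner) \<Rightarrow> ('b \<times> 'a) \<Rightarrow> complex" where
  "prod_cinner u v = cinner (fst u) (fst v) + cinner (snd u) (snd v)"

definition orth_proj :: "('b::complex_inner \<times> 'a::complex_inner) set \<Rightarrow> ('b \<times> 'a) \<Rightarrow> ('b \<times> 'a)" where
  "orth_proj M z = (THE p. p \<in> M \<and> (\<forall>m\<in>M. prod_cinner (z - p) m = 0))"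

text \<open>Gap \<open>\<theta>(A,B) = \<parallel>P_{G(A)} - P_{G(B)}\<parallel>\<close> (operator norm on \<open>H2 \<times> H1\<close>, Hilbert product norm).\<close>
definition gap :: "'a::complex_inner set \<Rightarrow> ('a \<Rightarrow> 'b::complex_inner) \<Rightarrow> 'a set \<Rightarrow> ('a \<Rightarrow> 'b) \<Rightarrow> real" where
  "gap DA A DB B = onorm (\<lambda>z. orth_proj (op_graph DA A) z - orth_proj (op_graph DB B) z)"

section \<open>Boundedness and operator norm of an operator defined on a domain E\<close>

definition bounded_on :: "'a::real_normed_vector set \<Rightarrow> ('a \<Rightarrow> 'b::real_normed_vector) \<Rightarrow> bool" where
  "bounded_on E f \<longleftrightarrow> (\<exists>C. \<forall>x\<in>E. norm (f x) \<le> C * norm x)"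

definition opnorm_on :: "'a::real_normed_vector set \<Rightarrow> ('a \<Rightarrow> 'b::real_normed_vector) \<Rightarrow> real" where
  "opnorm_on E f = Sup ((\<lambda>x. norm (f x) / norm x) ` E)"

end

theory Submission
  imports Defs
begin

(* ===== part A ===== *)


lemma scaleC_zero_left[simp]:
  fixes x y z :: "'a::complex_vector"
  shows "0 *\<^sub>C x = 0"
proof -
  have "0 *\<^sub>C x = (0+0) *\<^sub>C x" by simp
  also have "\<dots> = 0 *\<^sub>C x + 0 *\<^sub>C x" by (rule scaleC_add_left)
  finally show ?thesis by simp
qed
lemma scaleC_zero_right[simp]:
  fixes x y z :: "'a::complex_vector"
  shows "a *\<^sub>C 0 = 0"
proof -
  have "a *\<^sub>C 0 = a *\<^sub>C (0+0)" by simp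
  also have "\<dots> = a *\<^sub>C 0 + a *\<^sub>C 0" by (rule scaleC_add_right)
  finally show ?thesis by simp
qed
lemma scaleC_minus_left:
  fixes x y z :: "'a::complex_vector"
  shows "(- a) *\<^sub>C x = - (a *\<^sub>C x)"
proof -
  have "(- a) *\<^sub>C x + a *\<^sub>C x = 0" by (simp flip: scaleC_add_left)
  then show ?thesis by (simp only: add_eq_0_iff2)
qed
lemma scaleC_minus_right:
  fixes x y z :: "'a::complex_vector"
  shows "a *\<^sub>C (- x) = - (a *\<^sub>C x)"
proof -
  have "a *\<^sub>C (- x) + a *\<^sub>C x = 0" by (simp flip: scaleC_add_right)
  then show ?thesis by (simp only: add_eq_0_iff2)
qed
lemma scaleC_diff_right:
  fixes x y z :: "'a::complex_vector"
  shows "a *\<^sub>C (x - y) = a *\<^sub>C x - a *\<^sub>C y"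
  by (simp only: diff_conv_add_uminus scaleC_add_right scaleC_minus_right)
lemma scaleC_diff_left:
  fixes x y z :: "'a::complex_vector"
  shows "(a - b) *\<^sub>C x = a *\<^sub>C x - b *\<^sub>C x"
  using scaleC_add_left[of a "-b" x] by (simp add: scaleC_minus_left)
lemma scaleC_sum_right:
  fixes x y z :: "'a::complex_vector"
  shows "a *\<^sub>C sum f A = (\<Sum>i\<in>A. a *\<^sub>C f i)"
  by (induction A rule: infinite_finite_induct) (auto simp: scaleC_add_right)
lemma scaleC_one_real[simp]:
  fixes x y z :: "'a::complex_vector"
  shows "1 *\<^sub>C x = x" by (rule scaleC_one)
lemma scaleR_scaleC_comm:
  fixes x y z :: "'a::complex_vector"
  shows "r *\<^sub>R (a *\<^sub>C x) = a *\<^sub>C (r *\<^sub>R x)"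
  by (simp add: scaleR_scaleC scaleC_scaleC mult.commute)

lemma cinner_add_right:
  fixes x y z :: "'a::complex_inner"
  shows "cinner x (y + z) = cinner x y + cinner x z"
  by (simp only: cinner_commute[of x] cinner_add_left complex_cnj_add)
lemma cinner_scaleC_right:
  fixes x y z :: "'a::complex_inner"
  shows "cinner x (c *\<^sub>C y) = c * cinner x y"
  by (simp only: cinner_commute[of x] cinner_scaleC_left complex_cnj_cnj complex_cnj_mult)
lemma cinner_zero_left[simp]:
  fixes x y z :: "'a::complex_inner"
  shows "cinner 0 x = 0"
  using cinner_add_left[of 0 0 x] by simp
lemma cinner_zero_right[simp]:
  fixes x y z :: "'a::complex_inner"
  shows "cinner x 0 = 0"
  using cinner_add_right[of x 0 0] by simp
lemma cinner_minus_left: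
  fixes x y z :: "'a::complex_inner"
  shows "cinner (- x) y = - (cinner x y)"
proof -
  have "cinner x y + cinner (-x) y = 0" using cinner_add_left[of x "-x" y] by simp
  then show ?thesis by (rule sym[OF minus_unique])
qed
lemma cinner_minus_right:
  fixes x y z :: "'a::complex_inner"
  shows "cinner x (- y) = - (cinner x y)"
proof -
  have "cinner x y + cinner x (-y) = 0" using cinner_add_right[of x y "-y"] by simp
  then show ?thesis by (rule sym[OF minus_unique])
qed
lemma cinner_diff_left:
  fixes x y z :: "'a::complex_inner"
  shows "cinner (x - y) z = cinner x z - cinner y z"
  using cinner_add_left[of x "-y" z] by (simp add: cinner_minus_left)
lemma cinner_diff_right:
  fixes x y z :: "'a::complex_inner"
  shows "cinner x (y - z) = cinner x y - cinner x z"
  using cinner_add_right[of x y "-z"] by (simp add: cinner_minus_right)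
lemma cinner_scaleR_left:
  fixes x y z :: "'a::complex_inner"
  shows "cinner (r *\<^sub>R x) y = of_real r * cinner x y"
  by (simp add: scaleR_scaleC cinner_scaleC_left)
lemma cinner_scaleR_right:
  fixes x y z :: "'a::complex_inner"
  shows "cinner x (r *\<^sub>R y) = of_real r * cinner x y"
  by (simp add: scaleR_scaleC cinner_scaleC_right)
lemma cinner_sum_left:
  fixes x y z :: "'a::complex_inner"
  shows "cinner (sum f A) y = (\<Sum>i\<in>A. cinner (f i) y)"
  by (induction A rule: infinite_finite_induct) (auto simp: cinner_add_left)
lemma cinner_sum_right:
  fixes x y z :: "'a::complex_inner"
  shows "cinner y (sum f A) = (\<Sum>i\<in>A. cinner y (f i))"
  by (induction A rule: infinite_finite_induct) (auto simp: cinner_add_right)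

lemma cinner_self_Im:
  fixes x y z :: "'a::complex_inner"
  shows "Im (cinner x x) = 0"
proof -
  have "Im (cinner x x) = Im (cnj (cinner x x))" using cinner_commute[of x x] by simp
  then show ?thesis by simp
qed
lemma cinner_self:
  fixes x y z :: "'a::complex_inner"
  shows "cinner x x = complex_of_real ((norm x)\<^sup>2)"
  using cinner_self_Im[of x] cinner_ge_zero[of x]
  by (simp add: norm_eq_sqrt_cinner complex_eq_iff)
lemma norm_sq_cinner:
  fixes x y z :: "'a::complex_inner"
  shows "(norm x)\<^sup>2 = Re (cinner x x)"
  by (simp add: cinner_self)
lemma cinner_commute_Re:
  fixes x y z :: "'a::complex_inner"
  shows "Re (cinner x y) = Re (cinner y x)"
  by (subst cinner_commute) simp

lemma norm_add_sq:
  fixes x y z :: "'a::complex_inner"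
  shows "(norm (x + y))\<^sup>2 = (norm x)\<^sup>2 + (norm y)\<^sup>2 + 2 * Re (cinner x y)"
proof -
  have "Re (cinner (x+y) (x+y)) = Re (cinner x x) + Re (cinner y y) + Re (cinner x y) + Re (cinner y x)"
    by (simp add: cinner_add_left cinner_add_right)
  then show ?thesis using cinner_commute_Re[of y x] by (simp add: norm_sq_cinner)
qed
lemma norm_diff_sq:
  fixes x y z :: "'a::complex_inner"
  shows "(norm (x - y))\<^sup>2 = (norm x)\<^sup>2 + (norm y)\<^sup>2 - 2 * Re (cinner x y)"
proof -
  have "Re (cinner (x-y) (x-y)) = Re (cinner x x) + Re (cinner y y) - Re (cinner x y) - Re (cinner y x)"
    by (simp add: cinner_diff_left cinner_diff_right)
  then show ?thesis using cinner_commute_Re[of y x] by (simp add: norm_sq_cinner)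
qed

lemma cinner_scaleC_self:
  fixes x y z :: "'a::complex_inner"
  shows "cinner (c *\<^sub>C x) (c *\<^sub>C x) = complex_of_real ((cmod c)\<^sup>2) * cinner x x"
proof -
  have "cinner (c *\<^sub>C x) (c *\<^sub>C x) = (cnj c * c) * cinner x x"
    by (simp only: cinner_scaleC_left cinner_scaleC_right mult.assoc mult.left_commute)
  also have "cnj c * c = complex_of_real ((cmod c)\<^sup>2)"
    by (simp only: complex_norm_square mult.commute)
  finally show ?thesis .
qed
lemma norm_scaleC:
  fixes x y z :: "'a::complex_inner"
  shows "norm (c *\<^sub>C x) = cmod c * norm x"
proof -
  have "(norm (c *\<^sub>C x))\<^sup>2 = Re (complex_of_real ((cmod c)\<^sup>2) * cinner x x)"
    by (simp only: norm_sq_cinner cinner_scaleC_self)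
  also have "\<dots> = (cmod c)\<^sup>2 * (norm x)\<^sup>2"
    by (simp add: norm_sq_cinner)
  finally have "(norm (c *\<^sub>C x))\<^sup>2 = (cmod c * norm x)\<^sup>2" by (simp only: power_mult_distrib)
  then show ?thesis by (simp add: power2_eq_iff_nonneg)
qed

lemma Re_cinner_le:
  fixes x y z :: "'a::complex_inner"
  shows "Re (cinner x y) \<le> norm x * norm y"
proof -
  let ?a = "norm x" and ?b = "norm y"
  have "(norm (?b *\<^sub>R x - ?a *\<^sub>R y))\<^sup>2 = (norm (?b *\<^sub>R x))\<^sup>2 + (norm (?a *\<^sub>R y))\<^sup>2 - 2 * Re (cinner (?b *\<^sub>R x) (?a *\<^sub>R y))"
    by (rule norm_diff_sq)
  also have "\<dots> = 2 * (?a * ?b) * (?a * ?b) - 2 * (?a * ?b) * Re (cinner x y)"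
    by (simp add: cinner_scaleR_left cinner_scaleR_right power2_eq_square)
  finally have "0 \<le> 2 * (?a * ?b) * (?a * ?b) - 2 * (?a * ?b) * Re (cinner x y)"
    by (metis zero_le_power2)
  then have "(?a * ?b) * Re (cinner x y) \<le> (?a * ?b) * (?a * ?b)" by simp
  then show ?thesis
  proof (cases "?a * ?b = 0")
    case True then show ?thesis by auto
  next
    case False then have "0 < ?a * ?b" by simp
    then show ?thesis using \<open>(?a * ?b) * Re (cinner x y) \<le> _\<close> by (simp add: mult_le_cancel_left_pos)
  qed
qed

(* ===== part B ===== *)


lemma cinner_CS:
  fixes x y :: "'a::complex_inner"
  shows "cmod (cinner x y) \<le> norm x * norm y"
proof (cases "cinner x y = 0")
  case True then show ?thesis by simp
next
  case False
  let ?z = "cinner x y"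
  have "cinner (?z *\<^sub>C x) y = cnj ?z * ?z" by (simp add: cinner_scaleC_left)
  then have "Re (cinner (?z *\<^sub>C x) y) = Re (?z * cnj ?z)" by (simp add: mult.commute)
  also have "?z * cnj ?z = complex_of_real ((cmod ?z)\<^sup>2)" by (rule complex_norm_square[symmetric])
  finally have "Re (cinner (?z *\<^sub>C x) y) = (cmod ?z)\<^sup>2" by (simp only: Re_complex_of_real)
  with Re_cinner_le[of "?z *\<^sub>C x" y] have "(cmod ?z)\<^sup>2 \<le> cmod ?z * norm x * norm y"
    by (simp add: norm_scaleC mult.assoc)
  then have "cmod ?z * cmod ?z \<le> cmod ?z * (norm x * norm y)"
    by (simp add: power2_eq_square mult.assoc)
  moreover have "0 < cmod ?z" using False by simp
  ultimately show ?thesis by (simp add: mult_le_cancel_left_pos)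
qed

lemma bounded_bilinear_cinner: "bounded_bilinear (cinner :: 'a::complex_inner \<Rightarrow> 'a \<Rightarrow> complex)"
proof
  fix a a' b b' :: 'a and r :: real
  show "cinner (a + a') b = cinner a b + cinner a' b" by (rule cinner_add_left)
  show "cinner a (b + b') = cinner a b + cinner a b'" by (rule cinner_add_right)
  show "cinner (r *\<^sub>R a) b = r *\<^sub>R cinner a b" by (simp add: cinner_scaleR_left scaleR_conv_of_real)
  show "cinner a (r *\<^sub>R b) = r *\<^sub>R cinner a b" by (simp add: cinner_scaleR_right scaleR_conv_of_real)
  show "\<exists>K. \<forall>a b. norm (cinner (a::'a) b) \<le> norm a * norm b * K"
    by (rule exI[of _ 1]) (simp add: cinner_CS)
qed

lemmas tendsto_cinner = bounded_bilinear.tendsto[OF bounded_bilinear_cinner]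
lemmas bounded_linear_cinner_left = bounded_bilinear.bounded_linear_left[OF bounded_bilinear_cinner]
lemmas bounded_linear_cinner_right = bounded_bilinear.bounded_linear_right[OF bounded_bilinear_cinner]

lemma cinner_self_eq_0: "cinner x x = 0 \<longleftrightarrow> (x::'a::complex_inner) = 0"
  by (rule cinner_eq_zero_iff)

lemma ortho_self_zero:
  fixes x :: "'a::complex_inner"
  shows "(\<And>y. cinner y x = 0) \<Longrightarrow> x = 0"
  using cinner_eq_zero_iff by blast

lemma norm_add_sq_ortho:
  fixes x y :: "'a::complex_inner"
  shows "cinner x y = 0 \<Longrightarrow> (norm (x + y))\<^sup>2 = (norm x)\<^sup>2 + (norm y)\<^sup>2"
  by (simp add: norm_add_sq)
lemma norm_diff_sq_ortho:
  fixes x y :: "'a::complex_inner"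
  shows "cinner x y = 0 \<Longrightarrow> (norm (x - y))\<^sup>2 = (norm x)\<^sup>2 + (norm y)\<^sup>2"
  by (simp add: norm_diff_sq)

lemma cinner_Re_self: "Re (cinner x x) = (norm (x::'a::complex_inner))\<^sup>2"
  by (simp add: norm_sq_cinner)

subsection \<open>Product instance\<close>

instantiation prod :: (complex_vector, complex_vector) complex_vector
begin
definition scaleC_prod_def: "c *\<^sub>C p = (c *\<^sub>C fst p, c *\<^sub>C snd p)"
instance
  by standard (auto simp: scaleC_prod_def scaleC_add_right scaleC_add_left scaleC_scaleC prod_eq_iff
      scaleR_scaleC[symmetric])
end

lemma scaleC_Pair[simp]: "c *\<^sub>C (a, b) = (c *\<^sub>C a, c *\<^sub>C b)"
  by (simp add: scaleC_prod_def)
lemma fst_scaleC[simp]: "fst (c *\<^sub>C p) = c *\<^sub>C fst p" by (simp add: scaleC_prod_def)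
lemma snd_scaleC[simp]: "snd (c *\<^sub>C p) = c *\<^sub>C snd p" by (simp add: scaleC_prod_def)

instantiation prod :: (complex_inner, complex_inner) complex_inner
begin
definition cinner_prod_def: "cinner p q = cinner (fst p) (fst q) + cinner (snd p) (snd q)"
instance
proof
  fix x y z :: "'a \<times> 'b" and r :: complex
  show "cinner x y = cnj (cinner y x)"
    unfolding cinner_prod_def by (subst (1 2) cinner_commute) simp
  show "cinner (x + y) z = cinner x z + cinner y z"
    unfolding cinner_prod_def by (simp add: cinner_add_left)
  show "cinner (r *\<^sub>C x) y = cnj r * cinner x y"
    unfolding cinner_prod_def by (simp add: cinner_scaleC_left distrib_left)
  show "0 \<le> Re (cinner x x)"
    unfolding cinner_prod_def by (simp add: cinner_Re_self)
  show "(cinner x x = 0) = (x = 0)"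
  proof
    assume "cinner x x = 0"
    then have "complex_of_real ((norm (fst x))\<^sup>2 + (norm (snd x))\<^sup>2) = 0"
      unfolding cinner_prod_def by (simp only: cinner_self of_real_add)
    then have "(norm (fst x))\<^sup>2 + (norm (snd x))\<^sup>2 = 0" by (simp only: of_real_eq_0_iff)
    then show "x = 0" by (simp add: prod_eq_iff add_nonneg_eq_0_iff)
  qed (simp add: cinner_prod_def)
  show "norm x = sqrt (Re (cinner x x))"
    unfolding cinner_prod_def norm_prod_def by (simp add: cinner_Re_self)
qed
end

instance prod :: (chilbert_space, chilbert_space) chilbert_space ..

lemma prod_cinner_eq: "prod_cinner u v = cinner u v"
  by (simp add: prod_cinner_def cinner_prod_def)

lemma cinner_Pair: "cinner (a, b) (c, d) = cinner a c + cinner b d"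
  by (simp add: cinner_prod_def)

subclass (in chilbert_space) banach ..


(* ===== part C ===== *)


subsection \<open>Subspaces\<close>

lemma csub_0: "csubspace M \<Longrightarrow> 0 \<in> M" by (simp add: csubspace_def)
lemma csub_add: "csubspace M \<Longrightarrow> x \<in> M \<Longrightarrow> y \<in> M \<Longrightarrow> x + y \<in> M" by (simp add: csubspace_def)
lemma csub_scaleC: "csubspace M \<Longrightarrow> x \<in> M \<Longrightarrow> c *\<^sub>C x \<in> M" by (simp add: csubspace_def)
lemma minus_scaleC: "- (x::'a::complex_vector) = (-1) *\<^sub>C x"
  by (simp add: scaleC_minus_left)
lemma csub_minus: "csubspace M \<Longrightarrow> x \<in> M \<Longrightarrow> - x \<in> M"
  by (simp add: minus_scaleC csub_scaleC)
lemma csub_diff: "csubspace M \<Longrightarrow> x \<in> M \<Longrightarrow> y \<in> M \<Longrightarrow> x - y \<in> M"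
  using csub_add[of M x "-y"] csub_minus[of M y] by simp
lemma csub_scaleR: "csubspace M \<Longrightarrow> x \<in> M \<Longrightarrow> r *\<^sub>R x \<in> M"
  by (simp add: scaleR_scaleC csub_scaleC)

lemma bounded_linear_scaleC: "bounded_linear (\<lambda>x::'a::complex_inner. c *\<^sub>C x)"
proof
  fix x y :: 'a and r :: real
  show "c *\<^sub>C (x + y) = c *\<^sub>C x + c *\<^sub>C y" by (rule scaleC_add_right)
  show "c *\<^sub>C r *\<^sub>R x = r *\<^sub>R c *\<^sub>C x" by (simp add: scaleR_scaleC_comm)
  show "\<exists>K. \<forall>x::'a. norm (c *\<^sub>C x) \<le> norm x * K"
    by (rule exI[of _ "cmod c"]) (simp add: norm_scaleC mult.commute)
qed

lemma tendsto_scaleC: "(f \<longlongrightarrow> (x::'a::complex_inner)) F \<Longrightarrow> ((\<lambda>n. c *\<^sub>C f n) \<longlongrightarrow> c *\<^sub>C x) F"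
  by (rule bounded_linear.tendsto[OF bounded_linear_scaleC])

lemma csubspace_closure:
  fixes M :: "'a::complex_inner set"
  assumes "csubspace M" shows "csubspace (closure M)"
  unfolding csubspace_def
proof (intro conjI ballI allI)
  show "0 \<in> closure M" using csub_0[OF assms] closure_subset by blast
next
  fix x y assume "x \<in> closure M" "y \<in> closure M"
  then obtain f g where f: "\<forall>n. f n \<in> M" "f \<longlonglongrightarrow> x" and g: "\<forall>n. g n \<in> M" "g \<longlonglongrightarrow> y"
    by (meson closure_sequential)
  have "\<forall>n. f n + g n \<in> M" using f g csub_add[OF assms] by blast
  moreover have "(\<lambda>n. f n + g n) \<longlonglongrightarrow> x + y" using f g by (intro tendsto_add)
  ultimately show "x + y \<in> closure M" by (meson closure_sequential)
next
  fix c x assume "x \<in> closure M"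
  then obtain f where f: "\<forall>n. f n \<in> M" "f \<longlonglongrightarrow> x" by (meson closure_sequential)
  have "\<forall>n. c *\<^sub>C f n \<in> M" using f csub_scaleC[OF assms] by blast
  moreover have "(\<lambda>n. c *\<^sub>C f n) \<longlonglongrightarrow> c *\<^sub>C x" using f by (intro tendsto_scaleC)
  ultimately show "c *\<^sub>C x \<in> closure M" by (meson closure_sequential)
qed

subsection \<open>Projection theorem\<close>

lemma parallelogram:
  fixes a b :: "'a::complex_inner"
  shows "(norm (a - b))\<^sup>2 + (norm (a + b))\<^sup>2 = 2 * (norm a)\<^sup>2 + 2 * (norm b)\<^sup>2"
  by (simp add: norm_add_sq norm_diff_sq)

lemma proj_exists:
  fixes M :: "'a::chilbert_space set"
  assumes sub: "csubspace M" and cl: "closed M"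
  shows "\<exists>p\<in>M. \<forall>m\<in>M. cinner (z - p) m = 0"
proof -
  let ?S = "(\<lambda>m. norm (z - m)) ` M"
  define d where "d = Inf ?S"
  have ne: "?S \<noteq> {}" using csub_0[OF sub] by blast
  have bdd: "bdd_below ?S" by (rule bdd_belowI[of _ 0]) auto
  have dle: "\<And>m. m \<in> M \<Longrightarrow> d \<le> norm (z - m)"
    unfolding d_def using bdd by (intro cInf_lower) auto
  have d0: "0 \<le> d" unfolding d_def using ne by (intro cInf_greatest) auto
  have "\<exists>m. m \<in> M \<and> (norm (z - m))\<^sup>2 < d\<^sup>2 + 1 / real (Suc n)" for n
  proof -
    let ?e = "sqrt (d\<^sup>2 + 1 / real (Suc n))"
    have "d = sqrt (d\<^sup>2)" using d0 by simp
    also have "\<dots> < ?e" by (intro real_sqrt_less_mono) simp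
    finally have "Inf ?S < ?e" unfolding d_def .
    then obtain s where "s \<in> ?S" "s < ?e" using cInf_less_iff[OF ne bdd] by blast
    then obtain m where m: "m \<in> M" "norm (z - m) < ?e" by auto
    then have "(norm (z - m))\<^sup>2 < ?e\<^sup>2"
      by (intro power_strict_mono) auto
    also have "?e\<^sup>2 = d\<^sup>2 + 1 / real (Suc n)" by simp
    finally show ?thesis using m by blast
  qed
  then obtain f where f: "\<And>n. f n \<in> M" "\<And>n. (norm (z - f n))\<^sup>2 < d\<^sup>2 + 1 / real (Suc n)"
    by metis
  have key: "(norm (f k - f n))\<^sup>2 < 2 / real (Suc n) + 2 / real (Suc k)" for n k
  proof -
    let ?a = "z - f n" and ?b = "z - f k"
    let ?mid = "(1/2::real) *\<^sub>R (f n + f k)"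
    have mid: "?mid \<in> M" using f(1) sub by (intro csub_scaleR csub_add) auto
    have "?a + ?b = 2 *\<^sub>R (z - ?mid)" by (simp add: algebra_simps scaleR_2)
    then have "norm (?a + ?b) = 2 * norm (z - ?mid)" by simp
    then have "2 * d \<le> norm (?a + ?b)" using dle[OF mid] by simp
    then have "(2 * d)\<^sup>2 \<le> (norm (?a + ?b))\<^sup>2" using d0 by (intro power_mono) auto
    moreover have "?a - ?b = f k - f n" by simp
    moreover note parallelogram[of ?a ?b] f(2)[of n] f(2)[of k]
    ultimately show ?thesis by (simp add: power_mult_distrib)
  qed
  have "Cauchy f"
  proof (rule CauchyI)
    fix e :: real assume e: "0 < e"
    obtain N :: nat where N: "4 / e\<^sup>2 < real N" using reals_Archimedean2 by blast
    have e2: "0 < e\<^sup>2" using e by simp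
    have "4 < real N * e\<^sup>2" using N e2 by (simp add: field_simps)
    moreover have "real (Suc N) * e\<^sup>2 = real N * e\<^sup>2 + e\<^sup>2" by (simp add: algebra_simps)
    ultimately have "4 < real (Suc N) * e\<^sup>2" using e2 by linarith
    then have "4 / real (Suc N) < e\<^sup>2" by (simp add: field_simps)
    show "\<exists>M. \<forall>m\<ge>M. \<forall>n\<ge>M. norm (f m - f n) < e"
    proof (intro exI allI impI)
      fix m n assume mn: "N \<le> m" "N \<le> n"
      have "2 / real (Suc n) \<le> 2 / real (Suc N)" "2 / real (Suc m) \<le> 2 / real (Suc N)"
        using mn by (auto intro!: divide_left_mono)
      moreover have "2 / real (Suc N) + 2 / real (Suc N) = 4 / real (Suc N)" by simp
      ultimately have "(norm (f m - f n))\<^sup>2 < e\<^sup>2"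
        using key[of m n] key[of n m] \<open>4 / real (Suc N) < e\<^sup>2\<close> by linarith
      then show "norm (f m - f n) < e"
        using e by (simp add: power_less_imp_less_base)
    qed
  qed
  then obtain p where p: "f \<longlonglongrightarrow> p" using Cauchy_convergent_iff convergent_def by blast
  have pM: "p \<in> M" using cl f(1) p closed_sequentially by blast
  have pmin: "(norm (z - p))\<^sup>2 \<le> (norm (z - m))\<^sup>2" if m: "m \<in> M" for m
  proof (rule LIMSEQ_le)
    show "(\<lambda>n. (norm (z - f n))\<^sup>2) \<longlonglongrightarrow> (norm (z - p))\<^sup>2"
      using p by (intro tendsto_intros)
    have inv0: "(\<lambda>n. 1 / real (Suc n)) \<longlonglongrightarrow> 0"
      using LIMSEQ_inverse_real_of_nat by (simp add: inverse_eq_divide)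
    show "(\<lambda>n. (norm (z - m))\<^sup>2 + 1 / real (Suc n)) \<longlonglongrightarrow> (norm (z - m))\<^sup>2"
      using tendsto_add[OF tendsto_const[of "(norm (z - m))\<^sup>2"] inv0] by simp
    have "d\<^sup>2 \<le> (norm (z - m))\<^sup>2" using dle[OF m] d0 by (intro power_mono) auto
    show "\<exists>N. \<forall>n\<ge>N. (norm (z - f n))\<^sup>2 \<le> (norm (z - m))\<^sup>2 + 1 / real (Suc n)"
    proof (intro exI[of _ 0] allI impI)
      fix n :: nat
      show "(norm (z - f n))\<^sup>2 \<le> (norm (z - m))\<^sup>2 + 1 / real (Suc n)"
        using f(2)[of n] \<open>d\<^sup>2 \<le> (norm (z - m))\<^sup>2\<close> by linarith
    qed
  qed
  have "\<forall>m\<in>M. cinner (z - p) m = 0"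
  proof
    fix m assume m: "m \<in> M"
    let ?w = "z - p"
    let ?a = "cinner ?w m"
    define t where "t = 1 / ((norm m)\<^sup>2 + 1)"
    have t0: "0 < t" unfolding t_def by (simp add: add_nonneg_pos)
    have pos: "0 < (norm m)\<^sup>2 + 1" by (simp add: add_nonneg_pos)
    have tm: "t * (norm m)\<^sup>2 \<le> 1" unfolding t_def using pos by (simp add: field_simps)
    let ?v = "t *\<^sub>R (cnj ?a *\<^sub>C m)"
    have vM: "p + ?v \<in> M" using pM m sub by (intro csub_add csub_scaleR csub_scaleC) auto
    have "(norm (z - p))\<^sup>2 \<le> (norm (?w - ?v))\<^sup>2"
      using pmin[OF vM] by (simp add: algebra_simps)
    also have "\<dots> = (norm ?w)\<^sup>2 + (norm ?v)\<^sup>2 - 2 * Re (cinner ?w ?v)" by (rule norm_diff_sq)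
    also have "norm ?v = t * (cmod ?a * norm m)" using t0 by (simp add: norm_scaleC)
    also have "Re (cinner ?w ?v) = t * (cmod ?a)\<^sup>2"
    proof -
      have "cinner ?w ?v = of_real t * (cnj ?a * ?a)"
        by (simp add: cinner_scaleR_right cinner_scaleC_right)
      also have "cnj ?a * ?a = complex_of_real ((cmod ?a)\<^sup>2)"
        by (simp only: complex_norm_square mult.commute)
      finally show ?thesis by simp
    qed
    finally have "2 * (t * (cmod ?a)\<^sup>2) \<le> (t * (cmod ?a * norm m))\<^sup>2" by simp
    then have "2 * t * (cmod ?a)\<^sup>2 \<le> t * ((cmod ?a)\<^sup>2 * (t * (norm m)\<^sup>2))"
      by (simp add: power_mult_distrib power2_eq_square algebra_simps)
    also have "\<dots> \<le> t * ((cmod ?a)\<^sup>2 * 1)"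
      using tm t0 by (intro mult_left_mono) auto
    finally have "(cmod ?a)\<^sup>2 \<le> 0" using t0 by (simp add: algebra_simps)
    then show "?a = 0" by simp
  qed
  then show ?thesis using pM by blast
qed

definition proj :: "'a::complex_inner set \<Rightarrow> 'a \<Rightarrow> 'a" where
  "proj M z = (THE p. p \<in> M \<and> (\<forall>m\<in>M. cinner (z - p) m = 0))"

lemma proj_unique:
  fixes M :: "'a::complex_inner set"
  assumes sub: "csubspace M"
    and p: "p \<in> M" "\<forall>m\<in>M. cinner (z - p) m = 0"
    and q: "q \<in> M" "\<forall>m\<in>M. cinner (z - q) m = 0"
  shows "p = q"
proof -
  have pq: "p - q \<in> M" using sub p q by (intro csub_diff)
  have "cinner (z - q) (p - q) - cinner (z - p) (p - q) = 0" using p q pq by simp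
  then have "cinner (p - q) (p - q) = 0" by (simp add: cinner_diff_left algebra_simps)
  then show ?thesis by (simp add: cinner_eq_zero_iff)
qed

lemma proj_props:
  fixes M :: "'a::chilbert_space set"
  assumes sub: "csubspace M" and cl: "closed M"
  shows "proj M z \<in> M" "\<forall>m\<in>M. cinner (z - proj M z) m = 0"
proof -
  obtain p where "p \<in> M" "\<forall>m\<in>M. cinner (z - p) m = 0" using proj_exists[OF sub cl] by blast
  then have "\<exists>!p. p \<in> M \<and> (\<forall>m\<in>M. cinner (z - p) m = 0)"
    using proj_unique[OF sub] by blast
  then have "proj M z \<in> M \<and> (\<forall>m\<in>M. cinner (z - proj M z) m = 0)"
    unfolding proj_def by (rule theI')
  then show "proj M z \<in> M" "\<forall>m\<in>M. cinner (z - proj M z) m = 0" by auto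
qed

lemma proj_eqI:
  fixes M :: "'a::chilbert_space set"
  assumes sub: "csubspace M" and cl: "closed M"
    and "p \<in> M" "\<forall>m\<in>M. cinner (z - p) m = 0"
  shows "proj M z = p"
  using proj_unique[OF sub proj_props[OF sub cl] assms(3,4)] .

lemma proj_norm_sq:
  fixes M :: "'a::chilbert_space set"
  assumes sub: "csubspace M" and cl: "closed M"
  shows "(norm z)\<^sup>2 = (norm (proj M z))\<^sup>2 + (norm (z - proj M z))\<^sup>2"
proof -
  have "cinner (z - proj M z) (proj M z) = 0" using proj_props[OF sub cl] by blast
  then have "cinner (proj M z) (z - proj M z) = 0" by (subst cinner_commute) simp
  then show ?thesis using norm_add_sq_ortho[of "proj M z" "z - proj M z"] by simp
qed

lemma proj_norm_le:
  fixes M :: "'a::chilbert_space set"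
  assumes sub: "csubspace M" and cl: "closed M"
  shows "norm (proj M z) \<le> norm z"
  using proj_norm_sq[OF sub cl, of z] by (simp add: power2_le_imp_le)

lemma bounded_linear_proj:
  fixes M :: "'a::chilbert_space set"
  assumes sub: "csubspace M" and cl: "closed M"
  shows "bounded_linear (proj M)"
proof
  fix x y :: 'a and r :: real
  note P = proj_props[OF sub cl]
  show "proj M (x + y) = proj M x + proj M y"
    using P[of x] P[of y] sub
    by (intro proj_eqI[OF sub cl]) (auto intro: csub_add simp: cinner_diff_left cinner_add_left algebra_simps)
  show "proj M (r *\<^sub>R x) = r *\<^sub>R proj M x"
  proof (rule proj_eqI[OF sub cl])
    show "r *\<^sub>R proj M x \<in> M" using P sub by (intro csub_scaleR) auto
    show "\<forall>m\<in>M. cinner (r *\<^sub>R x - r *\<^sub>R proj M x) m = 0"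
      using P[of x] by (simp flip: scaleR_diff_right add: cinner_scaleR_left)
  qed
  show "\<exists>K. \<forall>x. norm (proj M x) \<le> norm x * K"
    using proj_norm_le[OF sub cl] by (intro exI[of _ 1]) simp
qed

lemma proj_id: 
  fixes M :: "'a::chilbert_space set"
  assumes sub: "csubspace M" and cl: "closed M" and "z \<in> M"
  shows "proj M z = z"
  using assms by (intro proj_eqI) auto

lemma dense_in_closed:
  fixes M N :: "'a::chilbert_space set"
  assumes subM: "csubspace M" and MN: "M \<subseteq> N" and subN: "csubspace N" and clN: "closed N"
    and orth: "\<And>v. v \<in> N \<Longrightarrow> (\<forall>m\<in>M. cinner m v = 0) \<Longrightarrow> v = 0"
  shows "N \<subseteq> closure M"
proof
  fix v assume v: "v \<in> N"
  let ?C = "closure M"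
  have subC: "csubspace ?C" by (rule csubspace_closure[OF subM])
  have clC: "closed ?C" by simp
  have CN: "?C \<subseteq> N" using MN clN by (rule closure_minimal)
  note P = proj_props[OF subC clC, of v]
  have vp: "v - proj ?C v \<in> N" using v P(1) CN subN by (intro csub_diff) auto
  have "\<forall>m\<in>M. cinner m (v - proj ?C v) = 0"
  proof
    fix m assume "m \<in> M"
    then have "cinner (v - proj ?C v) m = 0" using P(2) closure_subset by blast
    then show "cinner m (v - proj ?C v) = 0" by (subst cinner_commute) simp
  qed
  then have "v - proj ?C v = 0" using orth[OF vp] by blast
  then show "v \<in> ?C" using P(1) by simp
qed


(* ===== part D ===== *)


definition cc :: "nat \<Rightarrow> real" where
  "cc n = (if n = 0 then 1 else if n = 1 then -1 else 0)"

function dc :: "nat \<Rightarrow> real" where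
  "dc n = (if n = 0 then 1 else (cc n - (\<Sum>i\<in>{1..<n}. dc i * dc (n - i))) / 2)"
  by auto
termination by (relation "Wellfounded.measure id") auto

declare dc.simps[simp del]

lemma dc_0[simp]: "dc 0 = 1" by (simp add: dc.simps)

lemma dc_conv: "(\<Sum>i\<le>n. dc i * dc (n - i)) = cc n"
proof (cases "n = 0")
  case True then show ?thesis by (simp add: cc_def)
next
  case False
  have set: "{..n} = insert 0 (insert n {1..<n})" using False by auto
  have "(\<Sum>i\<le>n. dc i * dc (n - i)) = dc 0 * dc n + (dc n * dc 0 + (\<Sum>i\<in>{1..<n}. dc i * dc (n - i)))"
    unfolding set using False by (simp add: sum.insert)
  also have "\<dots> = 2 * dc n + (\<Sum>i\<in>{1..<n}. dc i * dc (n - i))" by simp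
  also have "2 * dc n = cc n - (\<Sum>i\<in>{1..<n}. dc i * dc (n - i))"
    using False by (subst dc.simps) simp
  finally show ?thesis by simp
qed

lemma dc_nonpos: "n \<ge> 1 \<Longrightarrow> dc n \<le> 0"
proof (induction n rule: less_induct)
  case (less n)
  have "0 \<le> (\<Sum>i\<in>{1..<n}. dc i * dc (n - i))"
  proof (rule sum_nonneg)
    fix i assume i: "i \<in> {1..<n}"
    then have "dc i \<le> 0" "dc (n - i) \<le> 0" using less.IH by auto
    then show "0 \<le> dc i * dc (n - i)" by (simp add: mult_nonpos_nonpos)
  qed
  moreover have "cc n \<le> 0" using less.prems by (simp add: cc_def)
  ultimately show ?case using less.prems by (subst dc.simps) simp
qed

lemma two_q: "n \<ge> 1 \<Longrightarrow> 2 * (- dc n) = - cc n + (\<Sum>i\<in>{1..<n}. dc i * dc (n - i))"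
  by (subst dc.simps) (simp add: field_simps)

lemma double_sum_le:
  "(\<Sum>n\<in>{1..N}. \<Sum>i\<in>{1..<n}. dc i * dc (n - i)) \<le> (\<Sum>i\<in>{1..<N}. - dc i)\<^sup>2"
proof -
  have nn: "0 \<le> dc i * dc j" if "i \<ge> 1" "j \<ge> 1" for i j
    using dc_nonpos[OF that(1)] dc_nonpos[OF that(2)] by (simp add: mult_nonpos_nonpos)
  have "(\<Sum>n\<in>{1..N}. \<Sum>i\<in>{1..<n}. dc i * dc (n - i))
      = (\<Sum>(n,i)\<in>(SIGMA n:{1..N}. {1..<n}). dc i * dc (n - i))"
    by (rule sum.Sigma) auto
  also have "\<dots> = (\<Sum>(i,j)\<in>(\<lambda>(n,i). (i, n - i)) ` (SIGMA n:{1..N}. {1..<n}). dc i * dc j)"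
  proof (subst sum.reindex)
    show "inj_on (\<lambda>(n,i). (i, n - i)) (SIGMA n:{1..N}. {1..<n})"
      by (auto simp: inj_on_def)
  qed (auto intro!: sum.cong)
  also have "\<dots> \<le> (\<Sum>(i,j)\<in>{1..<N} \<times> {1..<N}. dc i * dc j)"
  proof (rule sum_mono2)
    show "finite ({1..<N} \<times> {1..<N})" by simp
    show "(\<lambda>(n,i). (i, n - i)) ` (SIGMA n:{1..N}. {1..<n}) \<subseteq> {1..<N} \<times> {1..<N}"
      by auto
    show "\<And>b. b \<in> {1..<N} \<times> {1..<N} - (\<lambda>(n,i). (i, n - i)) ` (SIGMA n:{1..N}. {1..<n}) \<Longrightarrow>
         0 \<le> (case b of (i, j) \<Rightarrow> dc i * dc j)"
      using nn by auto
  qed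
  also have "\<dots> = (\<Sum>i\<in>{1..<N}. - dc i)\<^sup>2"
    by (simp add: power2_eq_square sum_product sum.cartesian_product)
  finally show ?thesis .
qed

lemma partial_le_1: "(\<Sum>i\<in>{1..N}. - dc i) \<le> 1"
proof (induction N rule: less_induct)
  case (less N)
  show ?case
  proof (cases "N = 0")
    case True then show ?thesis by simp
  next
    case False
    have prev: "(\<Sum>i\<in>{1..<N}. - dc i) \<le> 1"
    proof (cases "N = 1")
      case True then show ?thesis by simp
    next
      case False
      then have "{1..<N} = {1..N - 1}" using \<open>N \<noteq> 0\<close> by auto
      then show ?thesis using less.IH[of "N - 1"] \<open>N \<noteq> 0\<close> by simp
    qed
    have nonneg: "0 \<le> (\<Sum>i\<in>{1..<N}. - dc i)" using dc_nonpos by (intro sum_nonneg) auto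
    have "2 * (\<Sum>i\<in>{1..N}. - dc i) = (\<Sum>n\<in>{1..N}. 2 * (- dc n))"
      by (simp add: sum_distrib_left)
    also have "\<dots> = (\<Sum>n\<in>{1..N}. - cc n + (\<Sum>i\<in>{1..<n}. dc i * dc (n - i)))"
      by (intro sum.cong refl two_q) auto
    also have "\<dots> = (\<Sum>n\<in>{1..N}. - cc n) + (\<Sum>n\<in>{1..N}. \<Sum>i\<in>{1..<n}. dc i * dc (n - i))"
      by (simp only: sum.distrib)
    also have "(\<Sum>n\<in>{1..N}. - cc n) = 1"
    proof -
      have "{1..N} = insert 1 {2..N}" using False by auto
      then show ?thesis by (simp add: cc_def)
    qed
    also have "(\<Sum>n\<in>{1..N}. \<Sum>i\<in>{1..<n}. dc i * dc (n - i)) \<le> 1"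
      using double_sum_le[of N] prev nonneg by (smt (verit) power_le_one)
    finally show ?thesis by simp
  qed
qed

lemma abs_dc: "\<bar>dc n\<bar> = (if n = 0 then 1 else - dc n)"
  using dc_nonpos[of n] by auto

lemma summable_abs_dc: "summable (\<lambda>n. \<bar>dc n\<bar>)"
proof (rule bounded_imp_summable)
  show "\<And>n. 0 \<le> \<bar>dc n\<bar>" by simp
  fix n :: nat
  have "{..n} = insert 0 {1..n}" by (auto simp: not_le less_one)
  then have "(\<Sum>k\<le>n. \<bar>dc k\<bar>) = 1 + (\<Sum>k\<in>{1..n}. - dc k)"
    by (simp add: abs_dc)
  also have "\<dots> \<le> 2" using partial_le_1[of n] by simp
  finally show "(\<Sum>k\<le>n. \<bar>dc k\<bar>) \<le> 2" .
qed

lemma summable_dc: "summable dc"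
  using summable_abs_dc by (rule summable_rabs_cancel)

lemma suminf_dc_nonneg: "0 \<le> suminf dc"
proof -
  have "(\<lambda>n. \<Sum>k<Suc n. dc k) \<longlonglongrightarrow> suminf dc"
    using summable_LIMSEQ[OF summable_dc] by (rule LIMSEQ_Suc)
  moreover have "\<forall>n. 0 \<le> (\<Sum>k<Suc n. dc k)"
  proof
    fix n
    have "{..<Suc n} = insert 0 {1..n}" by (auto simp: not_le less_one)
    then have "(\<Sum>k<Suc n. dc k) = 1 - (\<Sum>k\<in>{1..n}. - dc k)"
      by (simp add: sum_negf)
    then show "0 \<le> (\<Sum>k<Suc n. dc k)" using partial_le_1[of n] by simp
  qed
  ultimately show ?thesis by (intro LIMSEQ_le_const) auto
qed


(* ===== part E ===== *)


lemma Cauchy_product_sums_bilinear: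
  fixes a :: "nat \<Rightarrow> 'a::banach" and b :: "nat \<Rightarrow> 'b::banach"
    and prod :: "'a \<Rightarrow> 'b \<Rightarrow> 'c::banach"
  assumes bb: "bounded_bilinear prod"
    and a: "summable (\<lambda>k. norm (a k))"
    and b: "summable (\<lambda>k. norm (b k))"
  shows "(\<lambda>k. \<Sum>i\<le>k. prod (a i) (b (k - i))) sums (prod (\<Sum>k. a k) (\<Sum>k. b k))"
proof -
  obtain K where K: "0 < K" "\<And>x y. norm (prod x y) \<le> norm x * norm y * K"
    using bounded_bilinear.pos_bounded[OF bb] by blast
  let ?S1 = "\<lambda>n::nat. {..<n} \<times> {..<n}"
  let ?S2 = "\<lambda>n::nat. {(i,j). i + j < n}"
  have S1_mono: "\<And>m n. m \<le> n \<Longrightarrow> ?S1 m \<subseteq> ?S1 n" by auto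
  have S2_le_S1: "\<And>n. ?S2 n \<subseteq> ?S1 n" by auto
  have S1_le_S2: "\<And>n. ?S1 (n div 2) \<subseteq> ?S2 n" by auto
  have finite_S1: "\<And>n. finite (?S1 n)" by simp
  with S2_le_S1 have finite_S2: "\<And>n. finite (?S2 n)" by (rule finite_subset)

  let ?g = "\<lambda>(i,j). prod (a i) (b j)"
  let ?f = "\<lambda>(i,j). norm (a i) * norm (b j) * K"
  have f_nonneg: "\<And>x. 0 \<le> ?f x" using K by auto
  then have norm_sum_f: "\<And>A. norm (sum ?f A) = sum ?f A"
    unfolding real_norm_def
    by (simp only: abs_of_nonneg sum_nonneg [rule_format])
  have sumprod: "prod (\<Sum>k<n. a k) (\<Sum>k<n. b k) = sum ?g (?S1 n)" for n
  proof -
    have "prod (\<Sum>k<n. a k) (\<Sum>k<n. b k) = (\<Sum>i<n. prod (a i) (\<Sum>k<n. b k))"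
      by (rule bounded_bilinear.sum_left[OF bb])
    also have "\<dots> = (\<Sum>i<n. \<Sum>j<n. prod (a i) (b j))"
      by (simp add: bounded_bilinear.sum_right[OF bb])
    also have "\<dots> = sum ?g (?S1 n)" by (simp add: sum.cartesian_product)
    finally show ?thesis .
  qed
  have "(\<lambda>n. prod (\<Sum>k<n. a k) (\<Sum>k<n. b k)) \<longlonglongrightarrow> prod (\<Sum>k. a k) (\<Sum>k. b k)"
    by (intro bounded_bilinear.tendsto[OF bb] summable_LIMSEQ summable_norm_cancel [OF a] summable_norm_cancel [OF b])
  then have 1: "(\<lambda>n. sum ?g (?S1 n)) \<longlonglongrightarrow> prod (\<Sum>k. a k) (\<Sum>k. b k)"
    by (simp only: sumprod)
  have sf: "(\<Sum>k<n. norm (a k)) * (\<Sum>k<n. norm (b k)) * K = sum ?f (?S1 n)" for n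
  proof -
    have "(\<Sum>k<n. norm (a k)) * (\<Sum>k<n. norm (b k)) * K = (\<Sum>i<n. \<Sum>j<n. norm (a i) * norm (b j) * K)"
      by (simp add: sum_distrib_right sum_distrib_left) (rule sum.swap)
    then show ?thesis by (simp add: sum.cartesian_product)
  qed
  have "(\<lambda>n. (\<Sum>k<n. norm (a k)) * (\<Sum>k<n. norm (b k)) * K) \<longlonglongrightarrow> (\<Sum>k. norm (a k)) * (\<Sum>k. norm (b k)) * K"
    using a b by (intro tendsto_mult tendsto_const summable_LIMSEQ)
  then have "(\<lambda>n. sum ?f (?S1 n)) \<longlonglongrightarrow> (\<Sum>k. norm (a k)) * (\<Sum>k. norm (b k)) * K"
    by (simp only: sf)
  then have "convergent (\<lambda>n. sum ?f (?S1 n))"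
    by (rule convergentI)
  then have Cauchy: "Cauchy (\<lambda>n. sum ?f (?S1 n))"
    by (rule convergent_Cauchy)
  have "Zfun (\<lambda>n. sum ?f (?S1 n - ?S2 n)) sequentially"
  proof (rule ZfunI, simp only: eventually_sequentially norm_sum_f)
    fix r :: real
    assume r: "0 < r"
    from CauchyD [OF Cauchy r] obtain N
      where "\<forall>m\<ge>N. \<forall>n\<ge>N. norm (sum ?f (?S1 m) - sum ?f (?S1 n)) < r" ..
    then have "\<And>m n. N \<le> n \<Longrightarrow> n \<le> m \<Longrightarrow> norm (sum ?f (?S1 m - ?S1 n)) < r"
      by (simp only: sum_diff finite_S1 S1_mono)
    then have N: "\<And>m n. N \<le> n \<Longrightarrow> n \<le> m \<Longrightarrow> sum ?f (?S1 m - ?S1 n) < r"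
      by (simp only: norm_sum_f)
    show "\<exists>N. \<forall>n\<ge>N. sum ?f (?S1 n - ?S2 n) < r"
    proof (intro exI allI impI)
      fix n
      assume "2 * N \<le> n"
      then have n: "N \<le> n div 2" by simp
      have "sum ?f (?S1 n - ?S2 n) \<le> sum ?f (?S1 n - ?S1 (n div 2))"
        by (intro sum_mono2 finite_Diff finite_S1 f_nonneg Diff_mono subset_refl S1_le_S2)
      also have "\<dots> < r"
        using n div_le_dividend by (rule N)
      finally show "sum ?f (?S1 n - ?S2 n) < r" .
    qed
  qed
  then have "Zfun (\<lambda>n. sum ?g (?S1 n - ?S2 n)) sequentially"
    apply (rule Zfun_le [rule_format])
    apply (simp only: norm_sum_f)
    apply (rule order_trans [OF norm_sum sum_mono])
    apply (auto simp add: K)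
    done
  then have 2: "(\<lambda>n. sum ?g (?S1 n) - sum ?g (?S2 n)) \<longlonglongrightarrow> 0"
    unfolding tendsto_Zfun_iff diff_0_right
    by (simp only: sum_diff finite_S1 S2_le_S1)
  with 1 have "(\<lambda>n. sum ?g (?S2 n)) \<longlonglongrightarrow> prod (\<Sum>k. a k) (\<Sum>k. b k)"
    by (rule Lim_transform2)
  then show ?thesis
    by (simp only: sums_def sum.triangle_reindex)
qed


(* ===== part F ===== *)


subsection \<open>Generic facts on bounded complex-linear maps\<close>

lemma bounded_clinearI:
  assumes "\<And>x y. A (x + y) = A x + A y" "\<And>c x. A (c *\<^sub>C x) = c *\<^sub>C A x"
    "\<And>x. norm (A x) \<le> norm x * K"
  shows "bounded_clinear A"
  using assms unfolding bounded_clinear_def clinear_def clinear_on_def csubspace_def by blast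

lemma bounded_clinear_add: "bounded_clinear A \<Longrightarrow> A (x + y) = A x + A y"
  unfolding bounded_clinear_def clinear_def clinear_on_def by blast
lemma bounded_clinear_scaleC: "bounded_clinear A \<Longrightarrow> A (c *\<^sub>C x) = c *\<^sub>C A x"
  unfolding bounded_clinear_def clinear_def clinear_on_def by blast
lemma bounded_clinear_bound: "bounded_clinear A \<Longrightarrow> \<exists>K. \<forall>x. norm (A x) \<le> norm x * K"
  unfolding bounded_clinear_def by blast

lemma bounded_clinear_bounded_linear:
  fixes A :: "'a::complex_inner \<Rightarrow> 'b::complex_inner"
  assumes "bounded_clinear A" shows "bounded_linear A"
proof
  fix x y :: 'a and r :: real
  show "A (x + y) = A x + A y" using bounded_clinear_add[OF assms] .
  show "A (r *\<^sub>R x) = r *\<^sub>R A x" by (simp add: scaleR_scaleC bounded_clinear_scaleC[OF assms])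
  show "\<exists>K. \<forall>x. norm (A x) \<le> norm x * K" using bounded_clinear_bound[OF assms] .
qed

lemma bounded_clinear_zero: "bounded_clinear A \<Longrightarrow> A 0 = 0"
  using bounded_clinear_scaleC[of A 0 0] by simp

lemma bl_diff: "bounded_linear f \<Longrightarrow> f (x - y) = f x - f y"
  by (rule linear_diff[OF bounded_linear.linear])
lemma bl_scaleR: "bounded_linear f \<Longrightarrow> f (r *\<^sub>R x) = r *\<^sub>R f x"
  by (rule linear_scale[OF bounded_linear.linear])

lemma bounded_clinear_diff: "bounded_clinear A \<Longrightarrow> A (x - y) = A x - A y"
  using bl_diff[OF bounded_clinear_bounded_linear] by blast

subsection \<open>Positive operators\<close>

lemma positive_selfadj:
  fixes P :: "'a::complex_inner \<Rightarrow> 'a"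
  assumes add: "\<And>x y. P (x + y) = P x + P y" and sc: "\<And>c x. P (c *\<^sub>C x) = c *\<^sub>C P x"
    and pos: "positive_op P"
  shows "cinner y (P z) = cinner (P y) z"
proof -
  have im: "\<And>u. Im (cinner u (P u)) = 0" using pos unfolding positive_op_def by blast
  let ?a = "cinner y (P z)" and ?b = "cinner z (P y)"
  have "cinner (y + z) (P (y + z)) = cinner y (P y) + cinner z (P z) + (?a + ?b)"
    by (simp add: add cinner_add_left cinner_add_right)
  then have 1: "Im (?a + ?b) = 0" using im[of "y+z"] im[of y] im[of z] by simp
  have "cinner (y + \<i> *\<^sub>C z) (P (y + \<i> *\<^sub>C z)) = cinner y (P y) + cinner z (P z) + (\<i> * ?a - \<i> * ?b)"
    by (simp add: add sc cinner_add_left cinner_add_right cinner_scaleC_left cinner_scaleC_right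
        algebra_simps)
  then have 2: "Im (\<i> * ?a - \<i> * ?b) = 0" using im[of "y + \<i> *\<^sub>C z"] im[of y] im[of z] by simp
  from 1 2 have "?a = cnj ?b" by (simp add: complex_eq_iff)
  then show ?thesis by (metis cinner_commute)
qed

lemma positive_zero:
  fixes P :: "'a::complex_inner \<Rightarrow> 'a"
  assumes add: "\<And>x y. P (x + y) = P x + P y" and sc: "\<And>c x. P (c *\<^sub>C x) = c *\<^sub>C P x"
    and pos: "positive_op P" and y: "Re (cinner y (P y)) = 0"
  shows "P y = 0"
proof (rule ccontr)
  assume ne: "P y \<noteq> 0"
  have re: "\<And>u. 0 \<le> Re (cinner u (P u))" using pos unfolding positive_op_def by blast
  let ?z = "P y"
  let ?q = "(norm ?z)\<^sup>2" and ?c = "Re (cinner ?z (P ?z))"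
  have q: "0 < ?q" using ne by simp
  have c: "0 \<le> ?c" by (rule re)
  define s where "s = ?q / (?c + 1)"
  have s: "0 < s" unfolding s_def using q c by simp
  have sa: "cinner y (P ?z) = cinner ?z ?z"
    using positive_selfadj[OF add sc pos, of y ?z] .
  have "cinner (y - s *\<^sub>R ?z) (P (y - s *\<^sub>R ?z))
        = cinner y (P y) - of_real s * cinner y (P ?z) - of_real s * cinner ?z (P y)
          + of_real s * of_real s * cinner ?z (P ?z)"
  proof -
    have Pd: "P (y - s *\<^sub>R ?z) = P y - s *\<^sub>R P ?z"
    proof -
      have h1: "P (y - s *\<^sub>R ?z) + P (s *\<^sub>R ?z) = P y"
        using add[of "y - s *\<^sub>R ?z" "s *\<^sub>R ?z"] by simp
      have h2: "P (s *\<^sub>R ?z) = s *\<^sub>R P ?z" using sc[of "of_real s" ?z] by (simp add: scaleR_scaleC)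
      show ?thesis using eq_diff_eq[THEN iffD2, OF h1] h2 by simp
    qed
    show ?thesis unfolding Pd
      by (simp add: cinner_diff_left cinner_diff_right cinner_scaleR_left cinner_scaleR_right algebra_simps)
  qed
  then have "0 \<le> Re (cinner y (P y)) - s * ?q - s * ?q + s * s * ?c"
    using re[of "y - s *\<^sub>R ?z"] sa by (simp add: cinner_self)
  then have "2 * s * ?q \<le> s * (s * ?c)" using y by (simp add: algebra_simps)
  then have "2 * ?q \<le> s * ?c" using s by (simp add: mult.assoc)
  also have "s * ?c = ?q * (?c / (?c + 1))" unfolding s_def by simp
  also have "\<dots> \<le> ?q * 1" using q c by (intro mult_left_mono) auto
  finally show False using q by simp
qed

subsection \<open>Square root construction\<close>

locale sqrt_setting =
  fixes B :: "'a::chilbert_space \<Rightarrow> 'a"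
  assumes B_add: "\<And>x y. B (x + y) = B x + B y"
    and B_scaleC: "\<And>c x. B (c *\<^sub>C x) = c *\<^sub>C B x"
    and B_sa: "\<And>x y. cinner (B x) y = cinner x (B y)"
    and B_bnd: "\<And>x. (norm (B x))\<^sup>2 \<le> Re (cinner x (B x))"
begin

definition W :: "'a \<Rightarrow> 'a" where "W x = x - B x"

lemma W_add: "W (x + y) = W x + W y" by (simp add: W_def B_add)
lemma W_scaleC: "W (c *\<^sub>C x) = c *\<^sub>C W x" by (simp add: W_def B_scaleC scaleC_diff_right)
lemma W_sa: "cinner (W x) y = cinner x (W y)"
  by (simp add: W_def cinner_diff_left cinner_diff_right B_sa)
lemma W_norm: "norm (W x) \<le> norm x"
proof -
  have "(norm (W x))\<^sup>2 = (norm x)\<^sup>2 + (norm (B x))\<^sup>2 - 2 * Re (cinner x (B x))"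
    unfolding W_def by (rule norm_diff_sq)
  also have "\<dots> \<le> (norm x)\<^sup>2" using B_bnd[of x] zero_le_power2[of "norm (B x)"] by linarith
  finally have "(norm (W x))\<^sup>2 \<le> (norm x)\<^sup>2" .
  then show ?thesis by (rule power2_le_imp_le) simp
qed
lemma bl_W: "bounded_linear W"
proof
  fix x y :: 'a and r :: real
  show "W (x + y) = W x + W y" by (rule W_add)
  show "W (r *\<^sub>R x) = r *\<^sub>R W x" by (simp add: scaleR_scaleC W_scaleC)
  show "\<exists>K. \<forall>x. norm (W x) \<le> norm x * K" using W_norm by (intro exI[of _ 1]) simp
qed

definition Wn :: "nat \<Rightarrow> 'a \<Rightarrow> 'a" where "Wn n = W ^^ n"

lemma Wn_0[simp]: "Wn 0 x = x" by (simp add: Wn_def)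
lemma Wn_Suc: "Wn (Suc n) x = W (Wn n x)" by (simp add: Wn_def)
lemma Wn_1: "Wn (Suc 0) x = W x" by (simp add: Wn_def)
lemma Wn_plus: "Wn (i + j) x = Wn i (Wn j x)" by (simp add: Wn_def funpow_add)
lemma bl_Wn: "bounded_linear (Wn n)"
  by (induction n) (auto simp: Wn_def intro: bounded_linear_ident bounded_linear_compose[OF bl_W])
lemma Wn_scaleC: "Wn n (c *\<^sub>C x) = c *\<^sub>C Wn n x"
  by (induction n) (auto simp: Wn_Suc W_scaleC)
lemma Wn_sa: "cinner (Wn n x) y = cinner x (Wn n y)"
proof (induction n arbitrary: x y)
  case 0 then show ?case by simp
next
  case (Suc n)
  have "cinner (Wn (Suc n) x) y = cinner (Wn n x) (W y)" by (simp add: Wn_Suc W_sa)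
  also have "\<dots> = cinner x (Wn n (W y))" by (rule Suc.IH)
  also have "Wn n (W y) = Wn (Suc n) y" using Wn_plus[of n 1 y] by (simp add: Wn_Suc)
  finally show ?case .
qed
lemma Wn_norm: "norm (Wn n x) \<le> norm x"
  by (induction n) (auto simp: Wn_Suc intro: order_trans[OF W_norm])

definition Wb :: "nat \<Rightarrow> 'a \<Rightarrow>\<^sub>L 'a" where "Wb n = Blinfun (Wn n)"
lemma Wb_apply[simp]: "blinfun_apply (Wb n) = Wn n"
  unfolding Wb_def using bl_Wn by (rule bounded_linear_Blinfun_apply)
lemma norm_Wb: "norm (Wb n) \<le> 1"
  by (rule norm_blinfun_bound) (auto simp: Wn_norm)

definition Rop :: "'a \<Rightarrow>\<^sub>L 'a" where "Rop = (\<Sum>n. dc n *\<^sub>R Wb n)"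

lemma summable_norm_terms: "summable (\<lambda>n. norm (dc n *\<^sub>R Wb n))"
proof (rule summable_comparison_test'[OF summable_abs_dc])
  fix n :: nat
  have "norm (dc n *\<^sub>R Wb n) = \<bar>dc n\<bar> * norm (Wb n)" by simp
  also have "\<dots> \<le> \<bar>dc n\<bar>" using norm_Wb[of n] by (simp add: mult_left_le)
  finally show "norm (norm (dc n *\<^sub>R Wb n)) \<le> \<bar>dc n\<bar>" by simp
qed

lemma summable_terms: "summable (\<lambda>n. dc n *\<^sub>R Wb n)"
  using summable_norm_terms by (rule summable_norm_cancel)

definition Rf :: "'a \<Rightarrow> 'a" where "Rf x = blinfun_apply Rop x"

lemma bl_apply_at: "bounded_linear (\<lambda>f::'a \<Rightarrow>\<^sub>L 'a. blinfun_apply f x)"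
  by (rule bounded_bilinear.bounded_linear_left[OF bounded_bilinear_blinfun_apply])

lemma apply_term: "blinfun_apply (dc n *\<^sub>R Wb n) x = dc n *\<^sub>R Wn n x"
  by (simp add: blinfun.scaleR_left)

lemma summable_Rx: "summable (\<lambda>n. dc n *\<^sub>R Wn n x)"
  using bounded_linear.summable[OF bl_apply_at summable_terms, of x] by (simp add: apply_term)

lemma Rf_series: "Rf x = (\<Sum>n. dc n *\<^sub>R Wn n x)"
  unfolding Rf_def Rop_def
  using bounded_linear.suminf[OF bl_apply_at summable_terms, of x] by (simp add: apply_term)

lemma prod_term: "(dc i *\<^sub>R Wb i) o\<^sub>L (dc j *\<^sub>R Wb j) = (dc i * dc j) *\<^sub>R Wb (i + j)"
proof (rule blinfun_eqI)
  fix x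
  have "Wn i (dc j *\<^sub>R Wn j x) = dc j *\<^sub>R Wn i (Wn j x)"
    by (rule bl_scaleR[OF bl_Wn])
  then show "blinfun_apply ((dc i *\<^sub>R Wb i) o\<^sub>L (dc j *\<^sub>R Wb j)) x = blinfun_apply ((dc i * dc j) *\<^sub>R Wb (i + j)) x"
    by (simp add: blinfun.scaleR_left Wn_plus)
qed

lemma Rop_sq: "Rop o\<^sub>L Rop = Wb 0 - Wb 1"
proof -
  have "(\<lambda>k. \<Sum>i\<le>k. (dc i *\<^sub>R Wb i) o\<^sub>L (dc (k - i) *\<^sub>R Wb (k - i))) sums (Rop o\<^sub>L Rop)"
    unfolding Rop_def
    by (rule Cauchy_product_sums_bilinear[OF bounded_bilinear_blinfun_compose summable_norm_terms summable_norm_terms])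
  moreover have "(\<Sum>i\<le>k. (dc i *\<^sub>R Wb i) o\<^sub>L (dc (k - i) *\<^sub>R Wb (k - i))) = cc k *\<^sub>R Wb k" for k
  proof -
    have "(\<Sum>i\<le>k. (dc i *\<^sub>R Wb i) o\<^sub>L (dc (k - i) *\<^sub>R Wb (k - i))) = (\<Sum>i\<le>k. (dc i * dc (k - i)) *\<^sub>R Wb k)"
      by (intro sum.cong refl) (simp add: prod_term)
    also have "\<dots> = (\<Sum>i\<le>k. dc i * dc (k - i)) *\<^sub>R Wb k" by (simp add: scaleR_sum_left)
    finally show ?thesis by (simp add: dc_conv)
  qed
  ultimately have s1: "(\<lambda>k. cc k *\<^sub>R Wb k) sums (Rop o\<^sub>L Rop)" by simp
  have "(\<lambda>k. (if k = 0 then Wb k else 0) + (if k = 1 then - Wb k else 0)) sums (Wb 0 + - Wb 1)"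
    by (intro sums_add sums_single)
  moreover have "(\<lambda>k. (if k = 0 then Wb k else 0) + (if k = 1 then - Wb k else 0)) = (\<lambda>k. cc k *\<^sub>R Wb k)"
    by (auto simp: cc_def)
  ultimately have s2: "(\<lambda>k. cc k *\<^sub>R Wb k) sums (Wb 0 - Wb 1)" by simp
  show ?thesis using sums_unique2[OF s1 s2] .
qed

lemma Rf_Rf: "Rf (Rf x) = B x"
proof -
  have "Rf (Rf x) = blinfun_apply (Rop o\<^sub>L Rop) x" by (simp add: Rf_def)
  also have "\<dots> = x - W x" by (simp add: Rop_sq blinfun.diff_left Wn_Suc)
  finally show ?thesis by (simp add: W_def)
qed

lemma Rf_add: "Rf (x + y) = Rf x + Rf y"
  by (simp add: Rf_def blinfun.add_right)

lemma Rf_scaleC: "Rf (c *\<^sub>C x) = c *\<^sub>C Rf x"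
proof -
  have "Rf (c *\<^sub>C x) = (\<Sum>n. c *\<^sub>C (dc n *\<^sub>R Wn n x))"
    by (simp add: Rf_series Wn_scaleC scaleR_scaleC_comm)
  also have "\<dots> = c *\<^sub>C (\<Sum>n. dc n *\<^sub>R Wn n x)"
    using bounded_linear.suminf[OF bounded_linear_scaleC summable_Rx, of c x] by simp
  finally show ?thesis by (simp add: Rf_series)
qed

lemma Rf_norm: "norm (Rf x) \<le> norm x * norm Rop"
  unfolding Rf_def using norm_blinfun[of Rop x] by (simp add: mult.commute)

lemma bcl_Rf: "bounded_clinear Rf"
  by (rule bounded_clinearI[OF Rf_add Rf_scaleC Rf_norm])

lemma bl_cinner_left: "bounded_linear (\<lambda>x. cinner x (y::'a))"
  by (rule bounded_linear_cinner_left)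
lemma bl_cinner_right: "bounded_linear (\<lambda>x. cinner (y::'a) x)"
  by (rule bounded_linear_cinner_right)

lemma Rf_sa: "cinner (Rf x) y = cinner x (Rf y)"
proof -
  have "cinner (Rf x) y = (\<Sum>n. cinner (dc n *\<^sub>R Wn n x) y)"
    unfolding Rf_series by (rule bounded_linear.suminf[OF bl_cinner_left summable_Rx])
  also have "\<dots> = (\<Sum>n. cinner x (dc n *\<^sub>R Wn n y))"
    by (simp add: cinner_scaleR_left cinner_scaleR_right Wn_sa)
  also have "\<dots> = cinner x (Rf y)"
    unfolding Rf_series by (rule bounded_linear.suminf[OF bl_cinner_right summable_Rx, symmetric])
  finally show ?thesis .
qed

lemma cinner_Wn_real: "Im (cinner x (Wn n x)) = 0"
proof -
  have "cinner x (Wn n x) = cnj (cinner x (Wn n x))"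
    by (metis Wn_sa cinner_commute)
  then show ?thesis by (metis Im_complex_of_real Reals_cnj_iff complex_is_Real_iff)
qed

lemma Rf_pos: "positive_op Rf"
  unfolding positive_op_def
proof
  fix x
  let ?z = "\<lambda>n. cinner x (dc n *\<^sub>R Wn n x)"
  have sz: "summable ?z" by (rule bounded_linear.summable[OF bl_cinner_right summable_Rx])
  have eq: "cinner x (Rf x) = (\<Sum>n. ?z n)"
    unfolding Rf_series by (rule bounded_linear.suminf[OF bl_cinner_right summable_Rx])
  have "Im (cinner x (Rf x)) = (\<Sum>n. Im (?z n))"
    unfolding eq by (rule bounded_linear.suminf[OF bounded_linear_Im sz])
  also have "\<dots> = 0" by (simp add: cinner_scaleR_right cinner_Wn_real)
  finally have im: "Im (cinner x (Rf x)) = 0" .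
  have sre: "summable (\<lambda>n. Re (?z n))" by (rule bounded_linear.summable[OF bounded_linear_Re sz])
  have re: "Re (cinner x (Rf x)) = (\<Sum>n. Re (?z n))"
    unfolding eq by (rule bounded_linear.suminf[OF bounded_linear_Re sz])
  have le: "dc n * (norm x)\<^sup>2 \<le> Re (?z n)" for n
  proof (cases "n = 0")
    case True then show ?thesis by (simp add: cinner_scaleR_right cinner_Re_self)
  next
    case False
    then have d: "dc n \<le> 0" using dc_nonpos by simp
    have "Re (cinner x (Wn n x)) \<le> norm x * norm (Wn n x)" by (rule Re_cinner_le)
    also have "\<dots> \<le> norm x * norm x" using Wn_norm by (intro mult_left_mono) auto
    finally have "Re (cinner x (Wn n x)) \<le> (norm x)\<^sup>2" by (simp add: power2_eq_square)
    then have "dc n * (norm x)\<^sup>2 \<le> dc n * Re (cinner x (Wn n x))"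
      using d by (intro mult_left_mono_neg) auto
    then show ?thesis by (simp add: cinner_scaleR_right)
  qed
  have "0 \<le> suminf dc * (norm x)\<^sup>2" using suminf_dc_nonneg by simp
  also have "\<dots> = (\<Sum>n. dc n * (norm x)\<^sup>2)" by (rule suminf_mult2[OF summable_dc])
  also have "\<dots> \<le> (\<Sum>n. Re (?z n))"
    by (rule suminf_le[OF le summable_mult2[OF summable_dc] sre])
  finally show "Im (cinner x (Rf x)) = 0 \<and> 0 \<le> Re (cinner x (Rf x))" using im re by simp
qed

lemma commute_Rf:
  assumes R: "bounded_clinear R" and comm: "\<And>x. R (B x) = B (R x)"
  shows "R (Rf x) = Rf (R x)"
proof -
  have bl: "bounded_linear R" by (rule bounded_clinear_bounded_linear[OF R])
  have cW: "R (W y) = W (R y)" for y by (simp add: W_def bl_diff[OF bl] comm)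
  have cWn: "R (Wn n y) = Wn n (R y)" for n y by (induction n) (auto simp: Wn_Suc cW)
  have "R (Rf x) = (\<Sum>n. R (dc n *\<^sub>R Wn n x))"
    unfolding Rf_series by (rule bounded_linear.suminf[OF bl summable_Rx])
  also have "\<dots> = (\<Sum>n. dc n *\<^sub>R Wn n (R x))"
    by (simp add: bl_scaleR[OF bl] cWn)
  finally show ?thesis by (simp add: Rf_series)
qed

lemma sqrt_unique:
  assumes R: "bounded_clinear R" and pos: "positive_op R" and sq: "\<And>x. R (R x) = B x"
  shows "R = Rf"
proof
  fix x
  have addR: "\<And>x y. R (x + y) = R x + R y" using bounded_clinear_add[OF R] .
  have scR: "\<And>c x. R (c *\<^sub>C x) = c *\<^sub>C R x" using bounded_clinear_scaleC[OF R] .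
  have comm: "R (B y) = B (R y)" for y by (simp flip: sq)
  have c: "R (Rf y) = Rf (R y)" for y by (rule commute_Rf[OF R comm])
  let ?y = "Rf x - R x"
  have "Rf ?y + R ?y = 0"
    using Rf_Rf[of x] sq[of x] c[of x]
    by (simp add: bounded_clinear_diff[OF bcl_Rf] bounded_clinear_diff[OF R])
  then have "cinner ?y (Rf ?y) + cinner ?y (R ?y) = 0"
    by (simp flip: cinner_add_right)
  then have "Re (cinner ?y (Rf ?y)) + Re (cinner ?y (R ?y)) = 0" by (metis plus_complex.sel(1) zero_complex.sel(1))
  moreover have "0 \<le> Re (cinner ?y (Rf ?y))" "0 \<le> Re (cinner ?y (R ?y))"
    using Rf_pos pos unfolding positive_op_def by blast+
  ultimately have "Re (cinner ?y (Rf ?y)) = 0" by simp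
  then have Ry: "Rf ?y = 0" by (rule positive_zero[OF Rf_add Rf_scaleC Rf_pos])
  then have R'y: "R ?y = 0" using \<open>Rf ?y + R ?y = 0\<close> by simp
  have "cinner ?y ?y = cinner ?y (Rf x) - cinner ?y (R x)" by (simp add: cinner_diff_right)
  also have "\<dots> = cinner (Rf ?y) x - cinner (R ?y) x"
    using Rf_sa[of ?y x] positive_selfadj[OF addR scR pos, of ?y x] by simp
  also have "\<dots> = 0" using Ry R'y by simp
  finally have "?y = 0" by (simp add: cinner_eq_zero_iff)
  then show "R x = Rf x" by simp
qed

lemma op_sqrt_eq: "op_sqrt B = Rf"
proof -
  have "\<exists>!R. bounded_clinear R \<and> positive_op R \<and> (\<forall>x. R (R x) = B x)"
    using bcl_Rf Rf_pos Rf_Rf sqrt_unique by blast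
  then have "bounded_clinear (op_sqrt B) \<and> positive_op (op_sqrt B) \<and> (\<forall>x. op_sqrt B (op_sqrt B x) = B x)"
    unfolding op_sqrt_def by (rule theI')
  then show ?thesis using sqrt_unique by blast
qed

lemma sqrt_props:
  "bounded_clinear (op_sqrt B)" "positive_op (op_sqrt B)" "\<And>x. op_sqrt B (op_sqrt B x) = B x"
  "\<And>x y. cinner (op_sqrt B x) y = cinner x (op_sqrt B y)"
  "\<And>x y. op_sqrt B (x + y) = op_sqrt B x + op_sqrt B y"
  "\<And>c x. op_sqrt B (c *\<^sub>C x) = c *\<^sub>C op_sqrt B x"
  by (simp_all add: op_sqrt_eq bcl_Rf Rf_pos Rf_Rf Rf_sa Rf_add Rf_scaleC)

end


(* ===== part G ===== *)


lemma Cauchy_transfer: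
  fixes f :: "nat \<Rightarrow> 'a::real_normed_vector" and g :: "nat \<Rightarrow> 'b::real_normed_vector"
  assumes "Cauchy f" "\<And>m n. norm (g m - g n) \<le> norm (f m - f n)"
  shows "Cauchy g"
proof (rule CauchyI)
  fix e :: real assume "0 < e"
  from CauchyD[OF assms(1) this] obtain M where "\<forall>m\<ge>M. \<forall>n\<ge>M. norm (f m - f n) < e" by blast
  then show "\<exists>M. \<forall>m\<ge>M. \<forall>n\<ge>M. norm (g m - g n) < e"
    using assms(2) by (meson order.strict_trans1)
qed

lemma norm_Pair_sq: "(norm (a, b))\<^sup>2 = (norm a)\<^sup>2 + (norm b)\<^sup>2"
  by (simp add: norm_prod_def)

lemma dense_zero:
  fixes D :: "'a::complex_inner set"
  assumes "densely_defined D" "\<And>x. x \<in> D \<Longrightarrow> cinner x v = 0"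
  shows "v = 0"
proof -
  have "v \<in> closure D" using assms(1) unfolding densely_defined_def by simp
  then obtain f where f: "\<forall>n. f n \<in> D" "f \<longlonglongrightarrow> v" by (meson closure_sequential)
  have "(\<lambda>n. cinner (f n) v) \<longlonglongrightarrow> cinner v v" using f(2) by (intro tendsto_cinner tendsto_const)
  moreover have "(\<lambda>n. cinner (f n) v) = (\<lambda>n. 0)" using f(1) assms(2) by blast
  ultimately have "(\<lambda>n. 0) \<longlonglongrightarrow> cinner v v" by simp
  then have "cinner v v = 0" by (rule LIMSEQ_unique[OF _ tendsto_const])
  then show ?thesis by (simp add: cinner_eq_zero_iff)
qed

locale gsetting =
  fixes B :: "'a::chilbert_space \<Rightarrow> 'a" and E :: "'a set" and L :: "'a \<Rightarrow> 'b::chilbert_space"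
  assumes E_sub: "csubspace E"
    and L_add: "\<And>x y. x \<in> E \<Longrightarrow> y \<in> E \<Longrightarrow> L (x + y) = L x + L y"
    and L_scaleC: "\<And>c x. x \<in> E \<Longrightarrow> L (c *\<^sub>C x) = c *\<^sub>C L x"
    and L_closed: "closed (op_graph E L)"
    and B_E: "\<And>h. B h \<in> E"
    and H: "\<And>x h. x \<in> E \<Longrightarrow> cinner x h = cinner x (B h) + cinner (L x) (L (B h))"
    and B_inj: "\<And>h. B h = 0 \<Longrightarrow> h = 0"
begin

lemma L_0: "L 0 = 0"
  using L_scaleC[of 0 0] csub_0[OF E_sub] by simp

lemma L_diff: "x \<in> E \<Longrightarrow> y \<in> E \<Longrightarrow> L (x - y) = L x - L y"
  using L_add[of "x - y" y] csub_diff[OF E_sub, of x y] by (simp add: eq_diff_eq)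

lemma graph_zero:
  assumes d: "d \<in> E" and o: "\<And>x. x \<in> E \<Longrightarrow> cinner x d + cinner (L x) (L d) = 0"
  shows "d = 0"
proof -
  have "cinner d d + cinner (L d) (L d) = 0" using o[OF d] .
  then have "(norm d)\<^sup>2 + (norm (L d))\<^sup>2 = 0"
    by (metis cinner_self of_real_add of_real_eq_0_iff)
  then show ?thesis by (simp add: add_nonneg_eq_0_iff)
qed

lemma B_add': "B (h + k) = B h + B k"
proof -
  let ?d = "B (h + k) - (B h + B k)"
  have dE: "?d \<in> E" using E_sub B_E by (intro csub_diff csub_add) auto
  have Ld: "L ?d = L (B (h + k)) - (L (B h) + L (B k))"
    using B_E E_sub by (simp add: L_diff L_add csub_add)
  show ?thesis
  proof (rule eq_iff_diff_eq_0[THEN iffD2], rule graph_zero[OF dE])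
    fix x assume x: "x \<in> E"
    show "cinner x ?d + cinner (L x) (L ?d) = 0"
      using H[OF x, of "h + k"] H[OF x, of h] H[OF x, of k]
      by (simp add: Ld cinner_diff_right cinner_add_right algebra_simps)
  qed
qed

lemma B_scaleC': "B (c *\<^sub>C h) = c *\<^sub>C B h"
proof -
  let ?d = "B (c *\<^sub>C h) - c *\<^sub>C B h"
  have dE: "?d \<in> E" using E_sub B_E by (intro csub_diff csub_scaleC) auto
  have Ld: "L ?d = L (B (c *\<^sub>C h)) - c *\<^sub>C L (B h)"
    using B_E E_sub by (simp add: L_diff L_scaleC csub_scaleC)
  show ?thesis
  proof (rule eq_iff_diff_eq_0[THEN iffD2], rule graph_zero[OF dE])
    fix x assume x: "x \<in> E"
    show "cinner x ?d + cinner (L x) (L ?d) = 0"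
      using H[OF x, of "c *\<^sub>C h"] H[OF x, of h]
      by (simp add: Ld cinner_diff_right cinner_scaleC_right algebra_simps)
  qed
qed

lemma B_form: "cinner (B h) k = cinner (B h) (B k) + cinner (L (B h)) (L (B k))"
  using H[OF B_E] .

lemma B_sa': "cinner (B h) k = cinner h (B k)"
proof -
  have "cinner h (B k) = cnj (cinner (B k) h)" by (rule cinner_commute)
  also have "cinner (B k) h = cinner (B k) (B h) + cinner (L (B k)) (L (B h))" by (rule B_form)
  also have "cnj (cinner (B k) (B h) + cinner (L (B k)) (L (B h))) = cinner (B h) (B k) + cinner (L (B h)) (L (B k))"
    by (simp only: complex_cnj_add flip: cinner_commute)
  also have "\<dots> = cinner (B h) k" by (rule B_form[symmetric])
  finally show ?thesis by simp
qed

lemma B_Re: "Re (cinner (B h) h) = (norm (B h))\<^sup>2 + (norm (L (B h)))\<^sup>2"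
  using B_form[of h h] by (simp add: cinner_Re_self)

lemma B_bnd': "(norm (B h))\<^sup>2 \<le> Re (cinner h (B h))"
proof -
  have "Re (cinner h (B h)) = Re (cinner (B h) h)" by (rule cinner_commute_Re)
  then show ?thesis using B_Re by simp
qed

sublocale sq: sqrt_setting B
  by standard (auto simp: B_add' B_scaleC' B_sa' B_bnd')

abbreviation "R \<equiv> op_sqrt B"

lemma R_add: "R (x + y) = R x + R y" by (rule sq.sqrt_props)
lemma R_scaleC: "R (c *\<^sub>C x) = c *\<^sub>C R x" by (rule sq.sqrt_props)
lemma R_sa: "cinner (R x) y = cinner x (R y)" by (rule sq.sqrt_props)
lemma R_R: "R (R x) = B x" by (rule sq.sqrt_props)
lemma R_bcl: "bounded_clinear R" by (rule sq.sqrt_props)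
lemma R_bl: "bounded_linear R" by (rule bounded_clinear_bounded_linear[OF R_bcl])
lemma R_diff: "R (x - y) = R x - R y" by (rule bl_diff[OF R_bl])
lemma R_0: "R 0 = 0" by (rule bounded_clinear_zero[OF R_bcl])
lemma B_diff: "B (x - y) = B x - B y" using R_R R_diff by metis

lemma gnorm: "(norm (B z))\<^sup>2 + (norm (L (B z)))\<^sup>2 = (norm (R z))\<^sup>2"
proof -
  have "(norm (B z))\<^sup>2 + (norm (L (B z)))\<^sup>2 = Re (cinner (B z) z)" by (simp add: B_Re)
  also have "cinner (B z) z = cinner (R z) (R z)" by (simp flip: R_R add: R_sa)
  finally show ?thesis by (simp add: cinner_Re_self)
qed

lemma LB_diff: "L (B x) - L (B y) = L (B (x - y))"
  by (simp add: B_diff L_diff B_E)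

lemma range_R_dense: "u \<in> closure (range R)"
proof -
  have sub: "csubspace (range R)"
    unfolding csubspace_def
  proof (intro conjI ballI allI)
    have "0 = R 0" by (simp add: R_0)
    then show "0 \<in> range R" by blast
    show "x + y \<in> range R" if "x \<in> range R" "y \<in> range R" for x y
    proof -
      from that obtain a b where "x = R a" "y = R b" by auto
      then have "x + y = R (a + b)" by (simp add: R_add)
      then show ?thesis by blast
    qed
    show "c *\<^sub>C x \<in> range R" if "x \<in> range R" for c x
    proof -
      from that obtain a where "x = R a" by auto
      then have "c *\<^sub>C x = R (c *\<^sub>C a)" by (simp add: R_scaleC)
      then show ?thesis by blast
    qed
  qed
  have "UNIV \<subseteq> closure (range R)"
  proof (rule dense_in_closed[OF sub])
    show "csubspace (UNIV :: 'a set)" by (simp add: csubspace_def)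
    fix v :: 'a assume "\<forall>m\<in>range R. cinner m v = 0"
    then have "\<And>z. cinner z (R v) = 0" by (simp add: R_sa)
    then have "R v = 0" by (rule ortho_self_zero)
    then have "B v = 0" by (metis R_R R_0)
    then show "v = 0" by (rule B_inj)
  qed auto
  then show ?thesis by auto
qed

lemma graph_mem: "(a, x) \<in> op_graph E L \<longleftrightarrow> x \<in> E \<and> a = L x"
  by (auto simp: op_graph_def)

lemma R_in_E: "R u \<in> E \<and> (norm (R u))\<^sup>2 + (norm (L (R u)))\<^sup>2 = (norm u)\<^sup>2"
proof -
  obtain s where s: "\<forall>n. s n \<in> range R" "s \<longlonglongrightarrow> u"
    using range_R_dense[of u] by (meson closure_sequential)
  have "\<forall>n. \<exists>a. s n = R a" using s(1) by blast
  then have "\<exists>z. \<forall>n. s n = R (z n)" by (rule choice)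
  then obtain z where "\<forall>n. s n = R (z n)" by blast
  then have "s = (\<lambda>n. R (z n))" by (simp add: fun_eq_iff)
  then have z: "(\<lambda>n. R (z n)) \<longlonglongrightarrow> u" using s(2) by simp
  have Bz: "(\<lambda>n. B (z n)) \<longlonglongrightarrow> R u"
    using bounded_linear.tendsto[OF R_bl z] by (simp add: R_R)
  have "Cauchy (\<lambda>n. R (z n))" using z by (rule LIMSEQ_imp_Cauchy)
  moreover have "norm (L (B (z m)) - L (B (z n))) \<le> norm (R (z m) - R (z n))" for m n
  proof -
    have "(norm (L (B (z m - z n))))\<^sup>2 \<le> (norm (R (z m - z n)))\<^sup>2"
      using gnorm[of "z m - z n"] zero_le_power2[of "norm (B (z m - z n))"] by linarith
    then have "norm (L (B (z m - z n))) \<le> norm (R (z m - z n))" by (rule power2_le_imp_le) simp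
    then show ?thesis by (simp add: LB_diff R_diff)
  qed
  ultimately have "Cauchy (\<lambda>n. L (B (z n)))" by (rule Cauchy_transfer)
  then obtain w where w: "(\<lambda>n. L (B (z n))) \<longlonglongrightarrow> w"
    using Cauchy_convergent_iff convergent_def by blast
  have c1: "(\<lambda>n. (L (B (z n)), B (z n))) \<longlonglongrightarrow> (w, R u)" using w Bz by (rule tendsto_Pair)
  have c2: "\<forall>n. (L (B (z n)), B (z n)) \<in> op_graph E L" by (simp add: graph_mem B_E)
  have "(w, R u) \<in> op_graph E L" by (rule closed_sequentially[OF L_closed c2[rule_format] c1])
  then have RuE: "R u \<in> E" and Lw: "w = L (R u)" by (auto simp: graph_mem)
  have "(\<lambda>n. (norm (B (z n)))\<^sup>2 + (norm (L (B (z n))))\<^sup>2) \<longlonglongrightarrow> (norm (R u))\<^sup>2 + (norm w)\<^sup>2"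
    using Bz w by (intro tendsto_intros)
  moreover have "(\<lambda>n. (norm (B (z n)))\<^sup>2 + (norm (L (B (z n))))\<^sup>2) \<longlonglongrightarrow> (norm u)\<^sup>2"
    unfolding gnorm using z by (intro tendsto_intros)
  ultimately have "(norm (R u))\<^sup>2 + (norm w)\<^sup>2 = (norm u)\<^sup>2" by (rule LIMSEQ_unique)
  then show ?thesis using RuE Lw by simp
qed

lemma R_E: "R u \<in> E" using R_in_E by blast
lemma R_iso: "(norm (R u))\<^sup>2 + (norm (L (R u)))\<^sup>2 = (norm u)\<^sup>2" using R_in_E by blast

lemma R_onto: assumes x: "x \<in> E" shows "\<exists>u. x = R u"
proof -
  let ?G = "op_graph E L"
  let ?M = "(\<lambda>z. (L (B z), B z)) ` UNIV"
  have subG: "csubspace ?G"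
    unfolding csubspace_def
  proof (intro conjI ballI allI)
    show "0 \<in> ?G" using csub_0[OF E_sub] L_0 by (simp add: graph_mem zero_prod_def)
    fix p q assume "p \<in> ?G" "q \<in> ?G"
    then show "p + q \<in> ?G" using E_sub by (auto simp: op_graph_def L_add csub_add)
  next
    fix c p assume "p \<in> ?G"
    then show "c *\<^sub>C p \<in> ?G" using E_sub by (auto simp: op_graph_def L_scaleC csub_scaleC)
  qed
  have subM: "csubspace ?M"
    unfolding csubspace_def
  proof (intro conjI ballI allI)
    have B0: "B 0 = 0" using R_R[of 0] R_0 by simp
    have "0 = (\<lambda>z. (L (B z), B z)) 0" using B0 L_0 by (simp add: zero_prod_def)
    then show "0 \<in> ?M" by blast
    fix p q assume "p \<in> ?M" "q \<in> ?M"
    then obtain a b where ab: "p = (L (B a), B a)" "q = (L (B b), B b)" by auto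
    then have "p + q = (\<lambda>z. (L (B z), B z)) (a + b)" by (simp add: B_add' L_add B_E)
    then show "p + q \<in> ?M" by blast
  next
    fix c p assume "p \<in> ?M"
    then obtain a where a: "p = (L (B a), B a)" by auto
    then have "c *\<^sub>C p = (\<lambda>z. (L (B z), B z)) (c *\<^sub>C a)" by (simp add: B_scaleC' L_scaleC B_E)
    then show "c *\<^sub>C p \<in> ?M" by blast
  qed
  have MG: "?M \<subseteq> ?G" by (auto simp: graph_mem B_E)
  have "?G \<subseteq> closure ?M"
  proof (rule dense_in_closed[OF subM MG subG L_closed])
    fix v assume v: "v \<in> ?G" and o: "\<forall>m\<in>?M. cinner m v = 0"
    obtain y where y: "y \<in> E" "v = (L y, y)" using v by (auto simp: op_graph_def)
    have "cinner z y = 0" for z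
    proof -
      have "0 = cinner (L (B z), B z) v" using o by auto
      also have "\<dots> = cinner (L (B z)) (L y) + cinner (B z) y" by (simp add: y cinner_Pair)
      also have "\<dots> = cnj (cinner (L y) (L (B z))) + cnj (cinner y (B z))"
        by (simp only: cinner_commute[of "L (B z)"] cinner_commute[of "B z"])
      also have "\<dots> = cnj (cinner (L y) (L (B z)) + cinner y (B z))" by simp
      also have "cinner (L y) (L (B z)) + cinner y (B z) = cinner y z"
        using H[OF y(1), of z] by simp
      finally have "cinner y z = 0" by simp
      then show ?thesis by (subst cinner_commute) simp
    qed
    then have "y = 0" by (rule ortho_self_zero)
    then show "v = 0" using y L_0 by (simp add: zero_prod_def)
  qed
  moreover have "(L x, x) \<in> ?G" using x by (simp add: graph_mem)
  ultimately have "(L x, x) \<in> closure ?M" by (rule subsetD)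
  then obtain s where s: "\<forall>n. s n \<in> ?M" "s \<longlonglongrightarrow> (L x, x)" by (meson closure_sequential)
  have "\<forall>n. \<exists>a. s n = (L (B a), B a)" using s(1) by blast
  then have "\<exists>z. \<forall>n. s n = (L (B (z n)), B (z n))" by (rule choice)
  then obtain z where zs: "\<And>n. s n = (L (B (z n)), B (z n))" by blast
  have "s = (\<lambda>n. (L (B (z n)), B (z n)))" using zs by (simp add: fun_eq_iff)
  then have sconv: "(\<lambda>n. (L (B (z n)), B (z n))) \<longlonglongrightarrow> (L x, x)" using s(2) by simp
  have Bzx: "(\<lambda>n. B (z n)) \<longlonglongrightarrow> x" using tendsto_snd[OF sconv] by simp
  have "Cauchy (\<lambda>n. R (z n))"
  proof (rule Cauchy_transfer)
    show "Cauchy (\<lambda>n. (L (B (z n)), B (z n)))" using sconv by (rule LIMSEQ_imp_Cauchy)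
    fix m n
    have "(norm (R (z m) - R (z n)))\<^sup>2 = (norm (B (z m - z n)))\<^sup>2 + (norm (L (B (z m - z n))))\<^sup>2"
      by (simp add: gnorm R_diff)
    also have "\<dots> = (norm ((L (B (z m)), B (z m)) - (L (B (z n)), B (z n))))\<^sup>2"
      by (simp add: norm_Pair_sq B_diff LB_diff add.commute)
    finally show "norm (R (z m) - R (z n)) \<le> norm ((L (B (z m)), B (z m)) - (L (B (z n)), B (z n)))"
      by simp
  qed
  then obtain u where u: "(\<lambda>n. R (z n)) \<longlonglongrightarrow> u" using Cauchy_convergent_iff convergent_def by blast
  have "(\<lambda>n. B (z n)) \<longlonglongrightarrow> R u" using bounded_linear.tendsto[OF R_bl u] by (simp add: R_R)
  then have "x = R u" using Bzx LIMSEQ_unique by blast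
  then show ?thesis by blast
qed

end


(* ===== part H ===== *)


locale cdo =
  fixes D :: "'a::chilbert_space set" and A :: "'a \<Rightarrow> 'b::chilbert_space"
  assumes lin: "clinear_on D A" and dense: "densely_defined D" and clo: "closed_op D A"
begin

lemma D_sub: "csubspace D" using lin by (simp add: clinear_on_def)
lemma A_add: "x \<in> D \<Longrightarrow> y \<in> D \<Longrightarrow> A (x + y) = A x + A y" using lin by (simp add: clinear_on_def)
lemma A_scaleC: "x \<in> D \<Longrightarrow> A (c *\<^sub>C x) = c *\<^sub>C A x" using lin by (simp add: clinear_on_def)
lemma A_diff: "x \<in> D \<Longrightarrow> y \<in> D \<Longrightarrow> A (x - y) = A x - A y"
  using A_add[of "x - y" y] csub_diff[OF D_sub, of x y] by (simp add: eq_diff_eq)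
lemma A_0: "A 0 = 0" using A_scaleC[of 0 0] csub_0[OF D_sub] by simp

lemma dense_unique: "(\<And>x. x \<in> D \<Longrightarrow> cinner x z1 = cinner x z2) \<Longrightarrow> z1 = z2"
  using dense_zero[OF dense, of "z1 - z2"] by (simp add: cinner_diff_right)

lemma adj_char: assumes "y \<in> adj_dom D A" shows "\<forall>x\<in>D. cinner (A x) y = cinner x (adj D A y)"
proof -
  obtain z where z: "\<forall>x\<in>D. cinner (A x) y = cinner x z" using assms by (auto simp: adj_dom_def)
  then have "\<exists>!z. \<forall>x\<in>D. cinner (A x) y = cinner x z" using dense_unique by metis
  then show ?thesis unfolding adj_def by (rule theI')
qed

lemma adj_eqI: assumes "\<forall>x\<in>D. cinner (A x) y = cinner x z"
  shows "y \<in> adj_dom D A" "adj D A y = z"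
proof -
  show yd: "y \<in> adj_dom D A" using assms by (auto simp: adj_dom_def)
  show "adj D A y = z" using adj_char[OF yd] assms dense_unique by metis
qed

lemma adj_add: assumes "y1 \<in> adj_dom D A" "y2 \<in> adj_dom D A"
  shows "y1 + y2 \<in> adj_dom D A" "adj D A (y1 + y2) = adj D A y1 + adj D A y2"
proof -
  have "\<forall>x\<in>D. cinner (A x) (y1 + y2) = cinner x (adj D A y1 + adj D A y2)"
    using adj_char[OF assms(1)] adj_char[OF assms(2)] by (simp add: cinner_add_right)
  then show "y1 + y2 \<in> adj_dom D A" "adj D A (y1 + y2) = adj D A y1 + adj D A y2"
    by (rule adj_eqI)+
qed

lemma adj_scaleC: assumes "y \<in> adj_dom D A"
  shows "c *\<^sub>C y \<in> adj_dom D A" "adj D A (c *\<^sub>C y) = c *\<^sub>C adj D A y"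
proof -
  have "\<forall>x\<in>D. cinner (A x) (c *\<^sub>C y) = cinner x (c *\<^sub>C adj D A y)"
    using adj_char[OF assms] by (simp add: cinner_scaleC_right)
  then show "c *\<^sub>C y \<in> adj_dom D A" "adj D A (c *\<^sub>C y) = c *\<^sub>C adj D A y"
    by (rule adj_eqI)+
qed

lemma adj_sub: "csubspace (adj_dom D A)"
  unfolding csubspace_def
proof (intro conjI ballI allI)
  show "0 \<in> adj_dom D A" using adj_eqI[of 0 0] by simp
qed (auto intro: adj_add adj_scaleC)

lemma adj_0: "adj D A 0 = 0" using adj_eqI[of 0 0] by simp

lemma adj_diff: "y1 \<in> adj_dom D A \<Longrightarrow> y2 \<in> adj_dom D A \<Longrightarrow> adj D A (y1 - y2) = adj D A y1 - adj D A y2"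
  using adj_add[of "y1 - y2" y2] csub_diff[OF adj_sub, of y1 y2] by (simp add: eq_diff_eq)

lemma adj_closed: "closed (op_graph (adj_dom D A) (adj D A))"
  unfolding closed_sequential_limits
proof (intro allI impI, elim conjE)
  fix p :: "nat \<Rightarrow> 'a \<times> 'b" and l
  assume mem: "\<forall>n. p n \<in> op_graph (adj_dom D A) (adj D A)" and lim: "p \<longlonglongrightarrow> l"
  let ?y = "\<lambda>n. snd (p n)"
  have ydpf: "?y n \<in> adj_dom D A \<and> fst (p n) = adj D A (?y n)" for n
  proof -
    have "p n \<in> op_graph (adj_dom D A) (adj D A)" using mem by blast
    then obtain x where "p n = (adj D A x, x)" "x \<in> adj_dom D A" by (auto simp: op_graph_def)
    then show ?thesis by simp
  qed
  have yd: "\<And>n. ?y n \<in> adj_dom D A" and pf: "\<And>n. fst (p n) = adj D A (?y n)"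
    using ydpf by auto
  have ly: "?y \<longlonglongrightarrow> snd l" using lim by (rule tendsto_snd)
  have lw: "(\<lambda>n. adj D A (?y n)) \<longlonglongrightarrow> fst l" using tendsto_fst[OF lim] by (simp add: pf)
  have "\<forall>x\<in>D. cinner (A x) (snd l) = cinner x (fst l)"
  proof
    fix x assume x: "x \<in> D"
    have "(\<lambda>n. cinner (A x) (?y n)) \<longlonglongrightarrow> cinner (A x) (snd l)" using ly by (intro tendsto_cinner tendsto_const)
    moreover have "(\<lambda>n. cinner (A x) (?y n)) = (\<lambda>n. cinner x (adj D A (?y n)))"
      using adj_char[OF yd] x by auto
    moreover have "(\<lambda>n. cinner x (adj D A (?y n))) \<longlonglongrightarrow> cinner x (fst l)" using lw by (intro tendsto_cinner tendsto_const)
    ultimately show "cinner (A x) (snd l) = cinner x (fst l)" using LIMSEQ_unique by metis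
  qed
  then have "snd l \<in> adj_dom D A" "adj D A (snd l) = fst l" by (rule adj_eqI)+
  then show "l \<in> op_graph (adj_dom D A) (adj D A)" by (auto simp: op_graph_def intro!: exI[of _ "snd l"] prod_eqI)
qed

lemma G_sub: "csubspace (op_graph D A)"
  unfolding csubspace_def
proof (intro conjI ballI allI)
  show "0 \<in> op_graph D A" using csub_0[OF D_sub] A_0 by (auto simp: op_graph_def zero_prod_def)
  fix p q assume "p \<in> op_graph D A" "q \<in> op_graph D A"
  then show "p + q \<in> op_graph D A" using D_sub by (auto simp: op_graph_def A_add csub_add)
next
  fix c p assume "p \<in> op_graph D A"
  then show "c *\<^sub>C p \<in> op_graph D A" using D_sub by (auto simp: op_graph_def A_scaleC csub_scaleC)
qed

lemma G_closed: "closed (op_graph D A)" using clo by (simp add: closed_op_def)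

lemma perp_char: "(\<forall>m \<in> op_graph D A. cinner r m = 0) \<longleftrightarrow> (fst r \<in> adj_dom D A \<and> snd r = - adj D A (fst r))"
proof
  assume h: "\<forall>m \<in> op_graph D A. cinner r m = 0"
  have "\<forall>x\<in>D. cinner (A x) (fst r) = cinner x (- snd r)"
  proof
    fix x assume x: "x \<in> D"
    have "cinner r (A x, x) = 0" using h x by (auto simp: op_graph_def)
    then have "cinner (fst r) (A x) + cinner (snd r) x = 0" by (simp add: cinner_prod_def)
    then have "cnj (cinner (fst r) (A x) + cinner (snd r) x) = 0" by simp
    then have "cinner (A x) (fst r) + cinner x (snd r) = 0"
      by (simp only: complex_cnj_add flip: cinner_commute)
    then show "cinner (A x) (fst r) = cinner x (- snd r)" by (simp add: cinner_minus_right add_eq_0_iff2)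
  qed
  then show "fst r \<in> adj_dom D A \<and> snd r = - adj D A (fst r)"
    using adj_eqI by fastforce
next
  assume h: "fst r \<in> adj_dom D A \<and> snd r = - adj D A (fst r)"
  show "\<forall>m \<in> op_graph D A. cinner r m = 0"
  proof
    fix m assume "m \<in> op_graph D A"
    then obtain x where x: "x \<in> D" "m = (A x, x)" by (auto simp: op_graph_def)
    have "cinner (A x) (fst r) = cinner x (adj D A (fst r))" using adj_char h x by blast
    then have "cnj (cinner (A x) (fst r)) = cnj (cinner x (adj D A (fst r)))" by simp
    then have "cinner (fst r) (A x) = cinner (adj D A (fst r)) x"
      by (simp only: flip: cinner_commute)
    then show "cinner r m = 0" using h x by (simp add: cinner_prod_def cinner_minus_left)
  qed
qed

lemma decomp: "\<exists>x\<in>D. \<exists>y\<in>adj_dom D A. k = A x + y \<and> h = x - adj D A y"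
proof -
  let ?G = "op_graph D A"
  note P = proj_props[OF G_sub G_closed, of "(k, h)"]
  obtain x where x: "x \<in> D" "proj ?G (k, h) = (A x, x)" using P(1) by (auto simp: op_graph_def)
  let ?r = "(k, h) - proj ?G (k, h)"
  have "fst ?r \<in> adj_dom D A \<and> snd ?r = - adj D A (fst ?r)" using P(2) perp_char by blast
  then have "k - A x \<in> adj_dom D A" "h - x = - adj D A (k - A x)" using x by auto
  then show ?thesis using x(1) by (intro bexI[of _ x] bexI[of _ "k - A x"]) (auto simp: algebra_simps)
qed

lemma check_ex: "\<exists>!x. x \<in> D \<and> A x \<in> adj_dom D A \<and> x + adj D A (A x) = h"
proof -
  obtain x y where xy: "x \<in> D" "y \<in> adj_dom D A" "0 = A x + y" "h = x - adj D A y"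
    using decomp[of 0 h] by blast
  have y: "y = - A x" using xy(3) by (simp add: eq_neg_iff_add_eq_0 add.commute)
  have Ax: "A x \<in> adj_dom D A" using csub_minus[OF adj_sub xy(2)] y by simp
  have "adj D A y = - adj D A (A x)" using adj_scaleC(2)[OF Ax, of "-1"] y by (simp add: minus_scaleC)
  then have ex: "x \<in> D \<and> A x \<in> adj_dom D A \<and> x + adj D A (A x) = h" using xy Ax by simp
  have "x1 = x2" if 1: "x1 \<in> D \<and> A x1 \<in> adj_dom D A \<and> x1 + adj D A (A x1) = h"
      and 2: "x2 \<in> D \<and> A x2 \<in> adj_dom D A \<and> x2 + adj D A (A x2) = h" for x1 x2
  proof -
    let ?d = "x1 - x2"
    have dD: "?d \<in> D" using 1 2 D_sub by (intro csub_diff) auto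
    have Ad: "A ?d = A x1 - A x2" using 1 2 by (simp add: A_diff)
    have Add: "A ?d \<in> adj_dom D A" using 1 2 Ad adj_sub by (simp add: csub_diff)
    have "?d + adj D A (A ?d) = 0" using 1 2 by (simp add: Ad adj_diff algebra_simps)
    then have "cinner ?d (?d + adj D A (A ?d)) = 0" by simp
    moreover have "cinner ?d (adj D A (A ?d)) = cinner (A ?d) (A ?d)" using adj_char[OF Add] dD by simp
    ultimately have "cinner ?d ?d + cinner (A ?d) (A ?d) = 0" by (simp add: cinner_add_right)
    then have "(norm ?d)\<^sup>2 + (norm (A ?d))\<^sup>2 = 0" by (metis cinner_self of_real_add of_real_eq_0_iff)
    then have "?d = 0" by (simp add: add_nonneg_eq_0_iff)
    then show ?thesis by simp
  qed
  then show ?thesis using ex by blast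
qed

lemma check_props: "check_op D A h \<in> D" "A (check_op D A h) \<in> adj_dom D A"
  "check_op D A h + adj D A (A (check_op D A h)) = h"
  using theI'[OF check_ex[of h]] unfolding check_op_def by auto

lemma hat_ex: "\<exists>!y. y \<in> adj_dom D A \<and> adj D A y \<in> D \<and> y + A (adj D A y) = k"
proof -
  obtain x y where xy: "x \<in> D" "y \<in> adj_dom D A" "k = A x + y" "0 = x - adj D A y"
    using decomp[of k 0] by blast
  have x: "x = adj D A y" using xy(4) by simp
  have ex: "y \<in> adj_dom D A \<and> adj D A y \<in> D \<and> y + A (adj D A y) = k" using xy x by (simp add: add.commute)
  have "y1 = y2" if 1: "y1 \<in> adj_dom D A \<and> adj D A y1 \<in> D \<and> y1 + A (adj D A y1) = k"
      and 2: "y2 \<in> adj_dom D A \<and> adj D A y2 \<in> D \<and> y2 + A (adj D A y2) = k" for y1 y2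
  proof -
    let ?d = "y1 - y2"
    have dA: "?d \<in> adj_dom D A" using 1 2 adj_sub by (intro csub_diff) auto
    have ad: "adj D A ?d = adj D A y1 - adj D A y2" using 1 2 by (simp add: adj_diff)
    have adD: "adj D A ?d \<in> D" using 1 2 ad D_sub by (simp add: csub_diff)
    have "?d + A (adj D A ?d) = 0" using 1 2 by (simp add: ad A_diff algebra_simps)
    then have "cinner ?d (?d + A (adj D A ?d)) = 0" by simp
    moreover have "cinner ?d (A (adj D A ?d)) = cinner (adj D A ?d) (adj D A ?d)"
    proof -
      have "cinner (A (adj D A ?d)) ?d = cinner (adj D A ?d) (adj D A ?d)" using adj_char[OF dA] adD by simp
      then show ?thesis by (metis cinner_commute complex_cnj_cnj)
    qed
    ultimately have "cinner ?d ?d + cinner (adj D A ?d) (adj D A ?d) = 0" by (simp add: cinner_add_right)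
    then have "(norm ?d)\<^sup>2 + (norm (adj D A ?d))\<^sup>2 = 0" by (metis cinner_self of_real_add of_real_eq_0_iff)
    then have "?d = 0" by (simp add: add_nonneg_eq_0_iff)
    then show ?thesis by simp
  qed
  then show ?thesis using ex by blast
qed

lemma hat_props: "hat_op D A k \<in> adj_dom D A" "adj D A (hat_op D A k) \<in> D"
  "hat_op D A k + A (adj D A (hat_op D A k)) = k"
  using theI'[OF hat_ex[of k]] unfolding hat_op_def by auto

lemma gs_check: "gsetting (check_op D A) D A"
proof
  show "csubspace D" by (rule D_sub)
  show "\<And>x y. x \<in> D \<Longrightarrow> y \<in> D \<Longrightarrow> A (x + y) = A x + A y" by (rule A_add)
  show "\<And>c x. x \<in> D \<Longrightarrow> A (c *\<^sub>C x) = c *\<^sub>C A x" by (rule A_scaleC)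
  show "closed (op_graph D A)" by (rule G_closed)
  show "\<And>h. check_op D A h \<in> D" by (rule check_props)
  show "cinner x h = cinner x (check_op D A h) + cinner (A x) (A (check_op D A h))" if x: "x \<in> D" for x h
  proof -
    have "cinner x h = cinner x (check_op D A h) + cinner x (adj D A (A (check_op D A h)))"
      using check_props(3)[of h] by (metis cinner_add_right)
    also have "cinner x (adj D A (A (check_op D A h))) = cinner (A x) (A (check_op D A h))"
      using adj_char[OF check_props(2)] x by simp
    finally show ?thesis .
  qed
  show "h = 0" if "check_op D A h = 0" for h
    using check_props(3)[of h] that by (simp add: A_0 adj_0)
qed

lemma gs_hat: "gsetting (hat_op D A) (adj_dom D A) (adj D A)"
proof
  show "csubspace (adj_dom D A)" by (rule adj_sub)
  show "\<And>x y. x \<in> adj_dom D A \<Longrightarrow> y \<in> adj_dom D A \<Longrightarrow> adj D A (x + y) = adj D A x + adj D A y"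
    by (rule adj_add)
  show "\<And>c x. x \<in> adj_dom D A \<Longrightarrow> adj D A (c *\<^sub>C x) = c *\<^sub>C adj D A x" by (rule adj_scaleC)
  show "closed (op_graph (adj_dom D A) (adj D A))" by (rule adj_closed)
  show "\<And>h. hat_op D A h \<in> adj_dom D A" by (rule hat_props)
  show "cinner x h = cinner x (hat_op D A h) + cinner (adj D A x) (adj D A (hat_op D A h))"
    if x: "x \<in> adj_dom D A" for x h
  proof -
    let ?w = "adj D A (hat_op D A h)"
    have "cinner x h = cinner x (hat_op D A h) + cinner x (A ?w)"
      using hat_props(3)[of h] by (metis cinner_add_right)
    also have "cinner x (A ?w) = cinner (adj D A x) ?w"
    proof -
      have "cinner (A ?w) x = cinner ?w (adj D A x)" using adj_char[OF x] hat_props(2) by blast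
      then show ?thesis by (metis cinner_commute)
    qed
    finally show ?thesis .
  qed
  show "h = 0" if "hat_op D A h = 0" for h
    using hat_props(3)[of h] that by (simp add: A_0 adj_0)
qed

end


(* ===== part I ===== *)


subsection \<open>Generic Hilbert space facts about two projections\<close>

lemma proj_perp:
  fixes M :: "'a::chilbert_space set"
  assumes "csubspace M" "closed M" "m \<in> M"
  shows "cinner m (z - proj M z) = 0"
proof -
  have "cinner (z - proj M z) m = 0" using proj_props[OF assms(1,2)] assms(3) by blast
  then show ?thesis by (subst cinner_commute) simp
qed

lemma proj_diff_norm_le:
  fixes M :: "'a::chilbert_space set"
  assumes "csubspace M" "closed M"
  shows "norm (z - proj M z) \<le> norm z"
  using proj_norm_sq[OF assms, of z] by (simp add: power2_le_imp_le)

lemma two_proj_split: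
  fixes M N :: "'a::chilbert_space set"
  assumes sM: "csubspace M" "closed M" and sN: "csubspace N" "closed N"
  shows "(norm (proj M z - proj N z))\<^sup>2 =
         (norm (proj M z - proj N (proj M z)))\<^sup>2 + (norm (proj N (z - proj M z)))\<^sup>2"
proof -
  have lin: "proj N z = proj N (proj M z) + proj N (z - proj M z)"
    using bounded_linear.linear[OF bounded_linear_proj[OF sN]] by (metis add_diff_cancel_left' linear_add diff_add_cancel)
  have e: "proj M z - proj N z = (proj M z - proj N (proj M z)) - proj N (z - proj M z)"
    using lin by simp
  have o: "cinner (proj M z - proj N (proj M z)) (proj N (z - proj M z)) = 0"
  proof -
    have "cinner (proj N (z - proj M z)) (proj M z - proj N (proj M z)) = 0"
      using proj_perp[OF sN proj_props(1)[OF sN]] .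
    then show ?thesis by (subst cinner_commute) simp
  qed
  show ?thesis unfolding e by (rule norm_diff_sq_ortho[OF o])
qed

lemma dual_bound:
  fixes M N :: "'a::chilbert_space set"
  assumes sM: "csubspace M" "closed M" and sN: "csubspace N" "closed N"
    and b0: "0 \<le> \<beta>" and bnd: "\<And>w. w \<in> N \<Longrightarrow> norm (w - proj M w) \<le> \<beta> * norm w"
  shows "norm (proj N (z - proj M z)) \<le> \<beta> * norm (z - proj M z)"
proof -
  let ?n = "z - proj M z"
  let ?w = "proj N ?n"
  have wN: "?w \<in> N" by (rule proj_props(1)[OF sN])
  have "cinner ?w ?n = cinner ?w ?w + cinner ?w (?n - ?w)" by (simp add: cinner_diff_right)
  also have "cinner ?w (?n - ?w) = 0" by (rule proj_perp[OF sN wN])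
  finally have 1: "cinner ?w ?n = cinner ?w ?w" by simp
  have "cinner ?w ?n = cinner (?w - proj M ?w) ?n + cinner (proj M ?w) ?n" by (simp add: cinner_diff_left)
  also have "cinner (proj M ?w) ?n = 0" by (rule proj_perp[OF sM proj_props(1)[OF sM]])
  finally have "cinner ?w ?w = cinner (?w - proj M ?w) ?n" using 1 by simp
  then have "(norm ?w)\<^sup>2 = Re (cinner (?w - proj M ?w) ?n)" by (simp add: cinner_Re_self[symmetric])
  also have "\<dots> \<le> norm (?w - proj M ?w) * norm ?n" by (rule Re_cinner_le)
  also have "\<dots> \<le> \<beta> * norm ?w * norm ?n" using bnd[OF wN] by (intro mult_right_mono) auto
  finally have "norm ?w * norm ?w \<le> norm ?w * (\<beta> * norm ?n)" by (simp add: power2_eq_square algebra_simps)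
  then show ?thesis
    by (cases "norm ?w = 0") (auto simp: b0 mult_le_cancel_left_pos)
qed

subsection \<open>A pair of operators on the same domain\<close>

locale pair = cS: cdo D S + cT: cdo D T for D :: "'a::chilbert_space set" and S T :: "'a \<Rightarrow> 'b::chilbert_space"

sublocale pair \<subseteq> gS: gsetting "check_op D S" D S by (rule cS.gs_check)
sublocale pair \<subseteq> hT: gsetting "hat_op D T" "adj_dom D T" "adj D T" by (rule cT.gs_hat)

context pair begin

abbreviation "RS \<equiv> op_sqrt (check_op D S)"
abbreviation "QT \<equiv> op_sqrt (hat_op D T)"
definition F :: "'a \<Rightarrow> 'b" where "F u = QT (T (RS u) - S (RS u))"

abbreviation "GrS \<equiv> op_graph D S"
abbreviation "GrT \<equiv> op_graph D T"

lemma QT_minus: "QT (- v) = - QT v" using hT.R_diff[of 0 v] hT.R_0 by simp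

lemma K: "cinner (S (RS u), RS u) (QT u', - adj D T (QT u')) = - cinner (F u) u'"
proof -
  let ?x = "RS u" and ?y = "QT u'"
  have x: "?x \<in> D" by (rule gS.R_E)
  have y: "?y \<in> adj_dom D T" by (rule hT.R_E)
  have "cinner (S ?x, ?x) (?y, - adj D T ?y) = cinner (S ?x) ?y - cinner ?x (adj D T ?y)"
    by (simp add: cinner_Pair cinner_minus_right)
  also have "cinner ?x (adj D T ?y) = cinner (T ?x) ?y" using cT.adj_char[OF y] x by simp
  also have "cinner (S ?x) ?y - cinner (T ?x) ?y = cinner (S ?x - T ?x) ?y" by (simp add: cinner_diff_left)
  also have "\<dots> = cinner (QT (S ?x - T ?x)) u'" by (rule hT.R_sa[symmetric])
  also have "QT (S ?x - T ?x) = - F u" unfolding F_def by (simp flip: QT_minus)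
  finally show ?thesis by (simp add: cinner_minus_left)
qed

lemma graph_norm: "x \<in> D \<Longrightarrow> (norm (S x, x))\<^sup>2 = (norm x)\<^sup>2 + (norm (S x))\<^sup>2"
  by (simp add: norm_Pair_sq add.commute)

lemma GS_param: assumes "w \<in> GrS" shows "\<exists>u. w = (S (RS u), RS u) \<and> norm w = norm u"
proof -
  obtain x where x: "x \<in> D" "w = (S x, x)" using assms by (auto simp: op_graph_def)
  obtain u where u: "x = RS u" using gS.R_onto[OF x(1)] by blast
  have "(norm w)\<^sup>2 = (norm u)\<^sup>2" using x u graph_norm gS.R_iso[of u] by simp
  then have "norm w = norm u" by (simp add: power2_eq_iff_nonneg)
  then show ?thesis using x u by blast
qed

lemma GS_mem: "(S (RS u), RS u) \<in> GrS" using gS.R_E by (auto simp: op_graph_def)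
lemma GS_norm: "norm (S (RS u), RS u) = norm u"
proof -
  have "(norm (S (RS u), RS u))\<^sup>2 = (norm u)\<^sup>2" using graph_norm[OF gS.R_E] gS.R_iso[of u] by simp
  then show ?thesis by (simp add: power2_eq_iff_nonneg)
qed

lemma perpT_param: assumes "\<forall>m\<in>GrT. cinner r m = 0"
  shows "\<exists>u'. r = (QT u', - adj D T (QT u')) \<and> norm r = norm u'"
proof -
  have r: "fst r \<in> adj_dom D T" "snd r = - adj D T (fst r)" using cT.perp_char assms by blast+
  obtain u' where u': "fst r = QT u'" using hT.R_onto[OF r(1)] by blast
  have req: "r = (QT u', - adj D T (QT u'))" using r u' by (simp add: prod_eq_iff)
  have "(norm r)\<^sup>2 = (norm (QT u'))\<^sup>2 + (norm (adj D T (QT u')))\<^sup>2"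
    unfolding req by (simp add: norm_Pair_sq)
  also have "\<dots> = (norm u')\<^sup>2" by (rule hT.R_iso)
  finally have "norm r = norm u'" by (simp add: power2_eq_iff_nonneg)
  then show ?thesis using req by blast
qed

lemma perpT_mem: "\<forall>m\<in>GrT. cinner (QT u', - adj D T (QT u')) m = 0"
  using cT.perp_char hT.R_E by simp

lemma perpT_norm: "norm (QT u', - adj D T (QT u')) = norm u'"
proof -
  have "(norm (QT u', - adj D T (QT u')))\<^sup>2 = (norm u')\<^sup>2" using hT.R_iso[of u'] by (simp add: norm_Pair_sq)
  then show ?thesis by (simp add: power2_eq_iff_nonneg)
qed

lemma A1:
  assumes a0: "0 \<le> \<alpha>" and Fb: "\<And>u. norm (F u) \<le> \<alpha> * norm u" and w: "w \<in> GrS"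
  shows "norm (w - proj GrT w) \<le> \<alpha> * norm w"
proof -
  let ?r = "w - proj GrT w"
  have rperp: "\<forall>m\<in>GrT. cinner ?r m = 0" using proj_props(2)[OF cT.G_sub cT.G_closed] by blast
  obtain u where u: "w = (S (RS u), RS u)" "norm w = norm u" using GS_param[OF w] by blast
  obtain u' where u': "?r = (QT u', - adj D T (QT u'))" "norm ?r = norm u'" using perpT_param[OF rperp] by blast
  have "cinner ?r ?r = cinner w ?r - cinner (proj GrT w) ?r" by (simp add: cinner_diff_left)
  also have "cinner (proj GrT w) ?r = 0" by (rule proj_perp[OF cT.G_sub cT.G_closed proj_props(1)[OF cT.G_sub cT.G_closed]])
  also have "cinner w ?r = - cinner (F u) u'" using K[of u u'] u u' by simp
  finally have "(norm ?r)\<^sup>2 = Re (- cinner (F u) u')" by (simp add: cinner_Re_self[symmetric])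
  also have "\<dots> \<le> cmod (cinner (F u) u')" using complex_Re_le_cmod[of "- cinner (F u) u'"] by simp
  also have "\<dots> \<le> norm (F u) * norm u'" by (rule cinner_CS)
  also have "\<dots> \<le> \<alpha> * norm u * norm u'" using Fb[of u] by (intro mult_right_mono) auto
  finally have "norm ?r * norm ?r \<le> norm ?r * (\<alpha> * norm w)" using u u' by (simp add: power2_eq_square algebra_simps)
  then show ?thesis by (cases "norm ?r = 0") (auto simp: a0 mult_le_cancel_left_pos)
qed

lemma A2: "norm (F u) \<le> norm ((S (RS u), RS u) - proj GrT (S (RS u), RS u))"
proof -
  let ?w = "(S (RS u), RS u)"
  let ?n = "(QT (F u), - adj D T (QT (F u)))"
  have nperp: "\<forall>m\<in>GrT. cinner ?n m = 0" by (rule perpT_mem)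
  have "cinner (F u) (F u) = - cinner ?w ?n" using K[of u "F u"] by simp
  also have "cinner ?w ?n = cinner (?w - proj GrT ?w) ?n + cinner (proj GrT ?w) ?n" by (simp add: cinner_diff_left)
  also have "cinner (proj GrT ?w) ?n = 0"
  proof -
    have "cinner ?n (proj GrT ?w) = 0" using nperp proj_props(1)[OF cT.G_sub cT.G_closed] by blast
    then show ?thesis by (subst cinner_commute) simp
  qed
  finally have "(norm (F u))\<^sup>2 = Re (- cinner (?w - proj GrT ?w) ?n)" by (simp add: cinner_Re_self[symmetric])
  also have "\<dots> \<le> cmod (cinner (?w - proj GrT ?w) ?n)" using complex_Re_le_cmod[of "- cinner (?w - proj GrT ?w) ?n"] by simp
  also have "\<dots> \<le> norm (?w - proj GrT ?w) * norm ?n" by (rule cinner_CS)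
  also have "norm ?n = norm (F u)" by (rule perpT_norm)
  finally have "norm (F u) * norm (F u) \<le> norm (F u) * norm (?w - proj GrT ?w)"
    by (simp add: power2_eq_square algebra_simps)
  then show ?thesis by (cases "norm (F u) = 0") (auto simp: mult_le_cancel_left_pos)
qed

lemma F_le_u: "norm (F u) \<le> norm u"
proof -
  have "norm (F u) \<le> norm ((S (RS u), RS u) - proj GrT (S (RS u), RS u))" by (rule A2)
  also have "\<dots> \<le> norm (S (RS u), RS u)" by (rule proj_diff_norm_le[OF cT.G_sub cT.G_closed])
  also have "\<dots> = norm u" by (rule GS_norm)
  finally show ?thesis .
qed

lemma QT_le: "norm (QT v) \<le> norm v"
proof -
  have "(norm (QT v))\<^sup>2 \<le> (norm v)\<^sup>2" using hT.R_iso[of v] zero_le_power2[of "norm (adj D T (QT v))"] by linarith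
  then show ?thesis by (rule power2_le_imp_le) simp
qed

lemma RS_le: "norm (RS v) \<le> norm v"
proof -
  have "(norm (RS v))\<^sup>2 \<le> (norm v)\<^sup>2" using gS.R_iso[of v] zero_le_power2[of "norm (S (RS v))"] by linarith
  then show ?thesis by (rule power2_le_imp_le) simp
qed

lemma F_0: "F 0 = 0" unfolding F_def by (simp add: gS.R_0 cS.A_0 cT.A_0 hT.R_0)

end


(* ===== part J ===== *)


lemma ratio_le:
  fixes f :: "'a::real_normed_vector \<Rightarrow> 'b::real_normed_vector"
  assumes "0 \<le> c" "norm (f x) \<le> c * norm x"
  shows "norm (f x) / norm x \<le> c"
  using assms by (cases "x = 0") (auto simp: divide_le_eq mult.commute)

lemma opn_props:
  fixes f :: "'a::real_normed_vector \<Rightarrow> 'b::real_normed_vector"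
  assumes z: "0 \<in> E" and f0: "f 0 = 0" and K: "\<And>x. x \<in> E \<Longrightarrow> norm (f x) \<le> K * norm x"
  shows "0 \<le> opnorm_on E f" "\<And>x. x \<in> E \<Longrightarrow> norm (f x) \<le> opnorm_on E f * norm x" "bounded_on E f"
proof -
  let ?S = "(\<lambda>x. norm (f x) / norm x) ` E"
  have bdd: "bdd_above ?S"
  proof (rule bdd_aboveI)
    fix r assume "r \<in> ?S"
    then obtain x where x: "x \<in> E" "r = norm (f x) / norm x" by auto
    have "norm (f x) \<le> max K 0 * norm x" using K[OF x(1)] by (smt (verit) mult_right_mono norm_ge_zero)
    then show "r \<le> max K 0" using x ratio_le[of "max K 0" f x] by simp
  qed
  have up: "norm (f x) / norm x \<le> opnorm_on E f" if "x \<in> E" for x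
    unfolding opnorm_on_def using bdd that by (intro cSup_upper) auto
  show "0 \<le> opnorm_on E f" using up[OF z] by simp
  show "norm (f x) \<le> opnorm_on E f * norm x" if x: "x \<in> E" for x
  proof (cases "x = 0")
    case True then show ?thesis using f0 by simp
  next
    case False then show ?thesis using up[OF x] by (simp add: divide_le_eq)
  qed
  then show "bounded_on E f" unfolding bounded_on_def by blast
qed

lemma opn_least:
  fixes f :: "'a::real_normed_vector \<Rightarrow> 'b::real_normed_vector"
  assumes "E \<noteq> {}" "0 \<le> c" "\<And>x. x \<in> E \<Longrightarrow> norm (f x) \<le> c * norm x"
  shows "opnorm_on E f \<le> c"
  unfolding opnorm_on_def using assms ratio_le by (intro cSup_least) auto

lemma orth_proj_eq: "orth_proj M z = proj M z"
  by (simp add: orth_proj_def proj_def prod_cinner_eq)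

theorem theorem3p1:
  fixes D :: "'a::chilbert_space set"
    and S T :: "'a \<Rightarrow> 'b::chilbert_space"
  assumes inf1: "infinite_dimensional TYPE('a)"
    and inf2: "infinite_dimensional TYPE('b)"
    and linS: "clinear_on D S" and linT: "clinear_on D T"
    and dense: "densely_defined D"
    and closedS: "closed_op D S" and closedT: "closed_op D T"
  shows
    "(let ES = {x. op_sqrt (check_op D S) x \<in> D};
          ET = {x. op_sqrt (check_op D T) x \<in> D};
          F = (\<lambda>x. op_sqrt (hat_op D T)
                  (T (op_sqrt (check_op D S) x) - S (op_sqrt (check_op D S) x)));
          G = (\<lambda>x. op_sqrt (hat_op D S)
                  (S (op_sqrt (check_op D T) x) - T (op_sqrt (check_op D T) x)))
      in bounded_on ES F \<and> bounded_on ET G \<and>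
         gap D S D T = max (opnorm_on ES F) (opnorm_on ET G))
     \<and> (bounded_on D (\<lambda>x. T x - S x) \<longrightarrow> gap D S D T \<le> opnorm_on D (\<lambda>x. S x - T x))"
proof -
  have cS: "cdo D S" using linS dense closedS by (simp add: cdo_def)
  have cT: "cdo D T" using linT dense closedT by (simp add: cdo_def)
  interpret p1: pair D S T by (simp add: pair_def cS cT)
  interpret p2: pair D T S by (simp add: pair_def cS cT)
  have ES: "{x. op_sqrt (check_op D S) x \<in> D} = UNIV" using p1.gS.R_E by auto
  have ET: "{x. op_sqrt (check_op D T) x \<in> D} = UNIV" using p2.gS.R_E by auto
  have F: "(\<lambda>x. op_sqrt (hat_op D T) (T (op_sqrt (check_op D S) x) - S (op_sqrt (check_op D S) x))) = p1.F"
    by (simp add: fun_eq_iff p1.F_def)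
  have G: "(\<lambda>x. op_sqrt (hat_op D S) (S (op_sqrt (check_op D T) x) - T (op_sqrt (check_op D T) x))) = p2.F"
    by (simp add: fun_eq_iff p2.F_def)
  let ?GS = "op_graph D S" and ?GT = "op_graph D T"
  let ?P = "proj ?GS" and ?Q = "proj ?GT"
  have gap: "gap D S D T = onorm (\<lambda>z. ?P z - ?Q z)" by (simp add: gap_def orth_proj_eq)
  have bl: "bounded_linear (\<lambda>z. ?P z - ?Q z)"
    by (intro bounded_linear_sub bounded_linear_proj p1.cS.G_sub p1.cS.G_closed p1.cT.G_sub p1.cT.G_closed)
  let ?a = "opnorm_on UNIV p1.F" and ?b = "opnorm_on UNIV p2.F"
  note a = opn_props[of UNIV p1.F 1, OF UNIV_I p1.F_0 , simplified, OF p1.F_le_u]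
  note b = opn_props[of UNIV p2.F 1, OF UNIV_I p2.F_0 , simplified, OF p2.F_le_u]
  have gap_le: "gap D S D T \<le> max ?a ?b"
    unfolding gap
  proof (rule onorm_bound)
    show "0 \<le> max ?a ?b" using a(1) by simp
    fix z
    let ?m = "max ?a ?b"
    have 1: "norm (?P z - ?Q (?P z)) \<le> ?a * norm (?P z)"
      using p1.A1[OF a(1) a(2) proj_props(1)[OF p1.cS.G_sub p1.cS.G_closed]] by simp
    have 2: "norm (?Q (z - ?P z)) \<le> ?b * norm (z - ?P z)"
      using p2.A1[OF b(1) b(2)] by (intro dual_bound p1.cS.G_sub p1.cS.G_closed p1.cT.G_sub p1.cT.G_closed b(1)) simp
    have "(norm (?P z - ?Q z))\<^sup>2 = (norm (?P z - ?Q (?P z)))\<^sup>2 + (norm (?Q (z - ?P z)))\<^sup>2"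
      by (rule two_proj_split[OF p1.cS.G_sub p1.cS.G_closed p1.cT.G_sub p1.cT.G_closed])
    also have "\<dots> \<le> (?a * norm (?P z))\<^sup>2 + (?b * norm (z - ?P z))\<^sup>2"
      using 1 2 by (intro add_mono power_mono) auto
    also have "\<dots> \<le> (?m * norm (?P z))\<^sup>2 + (?m * norm (z - ?P z))\<^sup>2"
      using a(1) b(1) by (intro add_mono power_mono mult_right_mono) auto
    also have "\<dots> = ?m\<^sup>2 * ((norm (?P z))\<^sup>2 + (norm (z - ?P z))\<^sup>2)" by (simp add: power_mult_distrib algebra_simps)
    also have "(norm (?P z))\<^sup>2 + (norm (z - ?P z))\<^sup>2 = (norm z)\<^sup>2"
      by (rule proj_norm_sq[OF p1.cS.G_sub p1.cS.G_closed, symmetric])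
    finally have "(norm (?P z - ?Q z))\<^sup>2 \<le> (?m * norm z)\<^sup>2" by (simp add: power_mult_distrib)
    then show "norm (?P z - ?Q z) \<le> ?m * norm z"
      by (rule power2_le_imp_le) (use a(1) in simp)
  qed
  have g0: "0 \<le> gap D S D T" unfolding gap by (rule onorm_pos_le[OF bl])
  have a_le: "?a \<le> gap D S D T"
  proof (rule opn_least)
    fix u :: 'a
    let ?w = "(S (op_sqrt (check_op D S) u), op_sqrt (check_op D S) u)"
    have "norm (p1.F u) \<le> norm (?w - ?Q ?w)" by (rule p1.A2)
    also have "?w - ?Q ?w = ?P ?w - ?Q ?w"
      using proj_id[OF p1.cS.G_sub p1.cS.G_closed p1.GS_mem] by simp
    also have "norm \<dots> \<le> gap D S D T * norm ?w" unfolding gap by (rule onorm[OF bl])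
    also have "norm ?w = norm u" by (rule p1.GS_norm)
    finally show "norm (p1.F u) \<le> gap D S D T * norm u" .
  qed (use g0 in auto)
  have b_le: "?b \<le> gap D S D T"
  proof (rule opn_least)
    fix u :: 'a
    let ?w = "(T (op_sqrt (check_op D T) u), op_sqrt (check_op D T) u)"
    have "norm (p2.F u) \<le> norm (?w - ?P ?w)" by (rule p2.A2)
    also have "?w - ?P ?w = - (?P ?w - ?Q ?w)"
      using proj_id[OF p1.cT.G_sub p1.cT.G_closed p2.GS_mem] by simp
    also have "norm \<dots> = norm (?P ?w - ?Q ?w)" by (rule norm_minus_cancel)
    also have "\<dots> \<le> gap D S D T * norm ?w" unfolding gap by (rule onorm[OF bl])
    also have "norm ?w = norm u" by (rule p2.GS_norm)
    finally show "norm (p2.F u) \<le> gap D S D T * norm u" .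
  qed (use g0 in auto)
  have part1: "bounded_on UNIV p1.F \<and> bounded_on UNIV p2.F \<and> gap D S D T = max ?a ?b"
    using a(3) b(3) gap_le a_le b_le by simp
  have part2: "gap D S D T \<le> opnorm_on D (\<lambda>x. S x - T x)" if bd: "bounded_on D (\<lambda>x. T x - S x)"
  proof -
    obtain C where C: "\<And>x. x \<in> D \<Longrightarrow> norm (T x - S x) \<le> C * norm x" using bd unfolding bounded_on_def by blast
    have 0: "0 \<in> D" by (rule csub_0[OF p1.cS.D_sub])
    note M = opn_props[of D "\<lambda>x. S x - T x" C, OF 0]
    have M0: "0 \<le> opnorm_on D (\<lambda>x. S x - T x)"
      and Mx: "\<And>x. x \<in> D \<Longrightarrow> norm (S x - T x) \<le> opnorm_on D (\<lambda>x. S x - T x) * norm x"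
      using M p1.cS.A_0 p1.cT.A_0 C by (auto simp: norm_minus_commute)
    let ?M = "opnorm_on D (\<lambda>x. S x - T x)"
    have "?a \<le> ?M"
    proof (rule opn_least)
      fix u :: 'a
      let ?x = "op_sqrt (check_op D S) u"
      have "norm (p1.F u) \<le> norm (T ?x - S ?x)" unfolding p1.F_def by (rule p1.QT_le)
      also have "\<dots> = norm (S ?x - T ?x)" by (rule norm_minus_commute)
      also have "\<dots> \<le> ?M * norm ?x" by (rule Mx[OF p1.gS.R_E])
      also have "\<dots> \<le> ?M * norm u" using M0 p1.RS_le by (intro mult_left_mono) auto
      finally show "norm (p1.F u) \<le> ?M * norm u" .
    qed (use M0 in auto)
    moreover have "?b \<le> ?M"
    proof (rule opn_least)
      fix u :: 'a
      let ?x = "op_sqrt (check_op D T) u"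
      have "norm (p2.F u) \<le> norm (S ?x - T ?x)" unfolding p2.F_def by (rule p2.QT_le)
      also have "\<dots> \<le> ?M * norm ?x" by (rule Mx[OF p2.gS.R_E])
      also have "\<dots> \<le> ?M * norm u" using M0 p2.RS_le by (intro mult_left_mono) auto
      finally show "norm (p2.F u) \<le> ?M * norm u" .
    qed (use M0 in auto)
    ultimately show ?thesis using part1 by simp
  qed
  show ?thesis
    unfolding Let_def ES ET F G using part1 part2 by blast
qed


end
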